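(* Let $M$ be a matroid on a finite set $S$, and let $T_0\subset T_1\subset\cdots\subset T_k$ be its primary flag. Then the sequence of primary factors $M(T_0,T_1),\dots,M(T_{k-1},T_k)$ is the unique sequence $M_1,\dots,M_k$ of nonempty matroids such that $M=M_1\mathbin{\Box}\cdots\mathbin{\Box} M_k$, each $M_i$ is either irreducible or uniform, and no free product of two or more consecutive $M_i$'s is uniform.
   Context: For a matroid $M$ on $S$ write $\rho_M$ for its rank function, $\rho(M)=\rho_M(S)$, $\nu_M(A)=|A|-\rho_M(A)$, $\lambda_M(A)=\rho(M)-\rho_M(A)$. For matroids $M$ on $S$ and $N$ on $T$ with $S\cap T=\emptyset$, the free product $M\mathbin{\Box} N$ is the matroid on $S\cup T$ whose independent sets are those $A$ with $A\cap S$ independent in $M$ and $\lambda_M(A\cap S)\geq\nu_N(A\cap T)$; it is associative, and "$M=M_1\mathbin{\Box}\cdots\mathbin{\Box} M_k$" means equality of matroids on $S$, with the ground sets of the $M_i$ partitioning $S$. A nonempty matroid $M$ is irreducible if every factorization of $M$ as a free product contains $M$ itself as a factor. For $A\subseteq B\subseteq S$, $M(A,B)$ denotes the minor $(M|B)/A$ on $B\setminus A$. A cyclic flat is a flat that is a union of circuits; $\mathcal D(M)$ is the complete sublattice of $2^S$ generated by all cyclic flats of $M$ (it contains $\emptyset$ and $S$). A pinchpoint of a poset is an element comparable to all elements. The primary flag of $M$ is the chain $T_0\subset\cdots\subset T_k$ of all pinchpoints of $\mathcal D(M)$, and the minors $M(T_{i-1},T_i)$ are the primary factors of $M$. *)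

theory Defs
  imports Main
begin

text \<open>A matroid is represented as a pair (ground set, family of independent sets).\<close>
type_synonym 'a matroid = "'a set \<times> 'a set set"

definition matroid :: "'a matroid \<Rightarrow> bool" where
  "matroid M \<longleftrightarrow> finite (fst M) \<and> snd M \<subseteq> Pow (fst M) \<and> {} \<in> snd M
     \<and> (\<forall>X Y. X \<in> snd M \<and> Y \<subseteq> X \<longrightarrow> Y \<in> snd M)
     \<and> (\<forall>X Y. X \<in> snd M \<and> Y \<in> snd M \<and> card X < card Y
           \<longrightarrow> (\<exists>y \<in> Y - X. insert y X \<in> snd M))"

definition rk :: "'a matroid \<Rightarrow> 'a set \<Rightarrow> nat" where
  "rk M A = Max (card ` {X \<in> snd M. X \<subseteq> A})"

definition lam :: "'a matroid \<Rightarrow> 'a set \<Rightarrow> nat" where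
  "lam M A = rk M (fst M) - rk M A"

definition nu :: "'a matroid \<Rightarrow> 'a set \<Rightarrow> nat" where
  "nu M A = card A - rk M A"

text \<open>Free product of M (on S) and N (on T), S and T disjoint.\<close>
definition free_prod :: "'a matroid \<Rightarrow> 'a matroid \<Rightarrow> 'a matroid" where
  "free_prod M N = (fst M \<union> fst N,
     {A. A \<subseteq> fst M \<union> fst N \<and> A \<inter> fst M \<in> snd M
         \<and> lam M (A \<inter> fst M) \<ge> nu N (A \<inter> fst N)})"

text \<open>Iterated free product M1 \<box> ... \<box> Mk (free product is associative).\<close>
fun free_prod_list :: "'a matroid list \<Rightarrow> 'a matroid" where
  "free_prod_list [] = ({}, {{}})"
| "free_prod_list [N] = N"
| "free_prod_list (N # Ns) = free_prod N (free_prod_list Ns)"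

definition partitions_ground :: "'a matroid list \<Rightarrow> 'a set \<Rightarrow> bool" where
  "partitions_ground Ms S \<longleftrightarrow>
     (\<forall>i < length Ms. fst (Ms ! i) \<noteq> {})
     \<and> (\<forall>i < length Ms. \<forall>j < length Ms. i \<noteq> j \<longrightarrow> fst (Ms ! i) \<inter> fst (Ms ! j) = {})
     \<and> (\<Union>i < length Ms. fst (Ms ! i)) = S"

definition factorization :: "'a matroid list \<Rightarrow> 'a matroid \<Rightarrow> bool" where
  "factorization Ms M \<longleftrightarrow> (\<forall>N \<in> set Ms. matroid N)
     \<and> partitions_ground Ms (fst M) \<and> M = free_prod_list Ms"

definition irreducible :: "'a matroid \<Rightarrow> bool" where
  "irreducible M \<longleftrightarrow> fst M \<noteq> {} \<and> (\<forall>Ms. factorization Ms M \<longrightarrow> M \<in> set Ms)"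

definition uniform :: "'a matroid \<Rightarrow> bool" where
  "uniform M \<longleftrightarrow> (\<exists>r. snd M = {X. X \<subseteq> fst M \<and> card X \<le> r})"

text \<open>The minor M(A,B) = (M|B)/A on B - A.\<close>
definition minor :: "'a matroid \<Rightarrow> 'a set \<Rightarrow> 'a set \<Rightarrow> 'a matroid" where
  "minor M A B = (B - A, {X. X \<subseteq> B - A \<and> rk M (X \<union> A) = card X + rk M A})"

definition circuit :: "'a matroid \<Rightarrow> 'a set \<Rightarrow> bool" where
  "circuit M C \<longleftrightarrow> C \<subseteq> fst M \<and> C \<notin> snd M \<and> (\<forall>D. D \<subset> C \<longrightarrow> D \<in> snd M)"

definition flat :: "'a matroid \<Rightarrow> 'a set \<Rightarrow> bool" where
  "flat M F \<longleftrightarrow> F \<subseteq> fst M \<and> (\<forall>x \<in> fst M - F. rk M (insert x F) > rk M F)"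

definition cyclic_flat :: "'a matroid \<Rightarrow> 'a set \<Rightarrow> bool" where
  "cyclic_flat M F \<longleftrightarrow> flat M F \<and> F = \<Union>{C. circuit M C \<and> C \<subseteq> F}"

text \<open>Complete sublattice of 2^S: closed under arbitrary unions and intersections
  (the empty union is {} and the empty intersection is S).\<close>
definition complete_sublattice :: "'a set \<Rightarrow> 'a set set \<Rightarrow> bool" where
  "complete_sublattice S L \<longleftrightarrow> L \<subseteq> Pow S
     \<and> (\<forall>F. F \<subseteq> L \<longrightarrow> \<Union>F \<in> L) \<and> (\<forall>F. F \<subseteq> L \<longrightarrow> S \<inter> \<Inter>F \<in> L)"

definition Dlat :: "'a matroid \<Rightarrow> 'a set set" where
  "Dlat M = \<Inter>{L. complete_sublattice (fst M) L \<and> {F. cyclic_flat M F} \<subseteq> L}"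

definition pinchpoint :: "'a matroid \<Rightarrow> 'a set \<Rightarrow> bool" where
  "pinchpoint M T \<longleftrightarrow> T \<in> Dlat M \<and> (\<forall>U \<in> Dlat M. T \<subseteq> U \<or> U \<subseteq> T)"

definition primary_flag :: "'a matroid \<Rightarrow> 'a set list \<Rightarrow> bool" where
  "primary_flag M Ts \<longleftrightarrow> sorted_wrt (\<subset>) Ts \<and> set Ts = {T. pinchpoint M T}"

definition primary_factors :: "'a matroid \<Rightarrow> 'a set list \<Rightarrow> 'a matroid list" where
  "primary_factors M Ts = map (\<lambda>i. minor M (Ts ! (i - 1)) (Ts ! i)) [1..<length Ts]"

end

theory Submission
  imports Defs
begin



locale mat =
  fixes M :: "'a matroid"
  assumes mat: "matroid M"
begin

abbreviation "S \<equiv> fst M"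
abbreviation "Ind \<equiv> snd M"
abbreviation "r \<equiv> rk M"

lemma finS: "finite S" using mat unfolding matroid_def by auto
lemma ind_sub: "X \<in> Ind \<Longrightarrow> X \<subseteq> S" using mat unfolding matroid_def by auto
lemma ind_fin: "X \<in> Ind \<Longrightarrow> finite X" using ind_sub finS finite_subset by blast
lemma ind_empty: "{} \<in> Ind" using mat unfolding matroid_def by auto
lemma ind_subset: "X \<in> Ind \<Longrightarrow> Y \<subseteq> X \<Longrightarrow> Y \<in> Ind" using mat unfolding matroid_def by blast
lemma augment: "X \<in> Ind \<Longrightarrow> Y \<in> Ind \<Longrightarrow> card X < card Y \<Longrightarrow> \<exists>y\<in>Y-X. insert y X \<in> Ind"
  using mat unfolding matroid_def by blast

lemma rk_set_fin: "finite {X \<in> Ind. X \<subseteq> A}"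
proof -
  have "{X \<in> Ind. X \<subseteq> A} \<subseteq> Pow S" using ind_sub by auto
  thus ?thesis using finS finite_subset by blast
qed

lemma rk_set_ne: "{X \<in> Ind. X \<subseteq> A} \<noteq> {}" using ind_empty by auto

lemma rk_ge: "X \<in> Ind \<Longrightarrow> X \<subseteq> A \<Longrightarrow> card X \<le> r A"
  unfolding rk_def using rk_set_fin by (intro Max_ge) auto

lemma rk_obtain: "\<exists>X\<in>Ind. X \<subseteq> A \<and> card X = r A"
proof -
  have "r A \<in> card ` {X \<in> Ind. X \<subseteq> A}" unfolding rk_def
    using rk_set_fin rk_set_ne by (intro Max_in) auto
  thus ?thesis by auto
qed

lemma rk_le: assumes "\<And>X. X \<in> Ind \<Longrightarrow> X \<subseteq> A \<Longrightarrow> card X \<le> k" shows "r A \<le> k"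
proof -
  obtain X where "X \<in> Ind" "X \<subseteq> A" "card X = r A" using rk_obtain by blast
  thus ?thesis using assms[of X] by simp
qed


lemma rk_le_card: "finite A \<Longrightarrow> r A \<le> card A"
  by (rule rk_le) (simp add: card_mono)

lemma ind_rk: "X \<in> Ind \<Longrightarrow> r X = card X"
proof -
  assume X: "X \<in> Ind"
  have "card X \<le> r X" using rk_ge[OF X] by simp
  moreover have "r X \<le> card X" using rk_le_card ind_fin[OF X] by simp
  ultimately show ?thesis by simp
qed

lemma rk_le_cardS: "r A \<le> card (A \<inter> S)"
  by (rule rk_le) (simp add: card_mono finS ind_sub)

lemma rk_card_ind: "finite X \<Longrightarrow> r X = card X \<Longrightarrow> X \<in> Ind"
proof -
  assume f: "finite X" and c: "r X = card X"
  obtain B where B: "B \<in> Ind" "B \<subseteq> X" "card B = r X" using rk_obtain by blast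
  have "B = X" using card_subset_eq[OF f B(2)] B c by simp
  thus ?thesis using B by simp
qed

lemma rk_mono: "A \<subseteq> B \<Longrightarrow> r A \<le> r B"
proof -
  assume AB: "A \<subseteq> B"
  obtain K where K: "K \<in> Ind" "K \<subseteq> A" "card K = r A" using rk_obtain by blast
  have "card K \<le> r B" using K AB by (intro rk_ge) auto
  thus ?thesis using K by simp
qed

lemma rk_empty: "r {} = 0" using rk_le_card[of "{}"] by simp

lemma extend: "X \<in> Ind \<Longrightarrow> X \<subseteq> A \<Longrightarrow> \<exists>B\<in>Ind. X \<subseteq> B \<and> B \<subseteq> A \<and> card B = r A"
proof -
  assume X: "X \<in> Ind" "X \<subseteq> A"
  let ?F = "{B \<in> Ind. X \<subseteq> B \<and> B \<subseteq> A}"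
  have fin: "finite ?F" using rk_set_fin[of A] by (rule finite_subset[rotated]) auto
  have ne: "?F \<noteq> {}" using X by auto
  obtain m where m: "m = Max (card ` ?F)" by simp
  have "m \<in> card ` ?F" using m fin ne by simp
  then obtain B where B: "B \<in> ?F" "card B = m" by auto
  have mx: "\<And>B'. B' \<in> ?F \<Longrightarrow> card B' \<le> card B" using m B fin by simp
  have "card B \<le> r A" using B rk_ge by auto
  moreover have "\<not> card B < r A"
  proof
    assume lt: "card B < r A"
    obtain K where K: "K \<in> Ind" "K \<subseteq> A" "card K = r A" using rk_obtain by blast
    then obtain y where y: "y \<in> K - B" "insert y B \<in> Ind" using augment[of B K] B lt by auto
    have "insert y B \<in> ?F" using y K B by auto
    hence "card (insert y B) \<le> card B" using mx by blast
    moreover have "finite B" using B ind_fin by auto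
    ultimately show False using y by simp
  qed
  ultimately show ?thesis using B by auto
qed

lemma rk_inter: "r A = r (A \<inter> S)"
proof -
  obtain K where K: "K \<in> Ind" "K \<subseteq> A" "card K = r A" using rk_obtain by blast
  have "card K \<le> r (A \<inter> S)" using K ind_sub by (intro rk_ge) auto
  moreover have "r (A \<inter> S) \<le> r A" by (intro rk_mono) auto
  ultimately show ?thesis using K by simp
qed

lemma rk_submod: "r (A \<union> B) + r (A \<inter> B) \<le> r A + r B"
proof -
  obtain J where J: "J \<in> Ind" "J \<subseteq> A \<inter> B" "card J = r (A \<inter> B)" using rk_obtain by blast
  obtain K where K: "K \<in> Ind" "J \<subseteq> K" "K \<subseteq> A \<union> B" "card K = r (A \<union> B)"
    using extend[of J "A \<union> B"] J by auto
  have fK: "finite K" using K ind_fin by auto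
  have "card (K \<inter> A) \<le> r A" using K ind_subset by (intro rk_ge) auto
  moreover have "card (K \<inter> B) \<le> r B" using K ind_subset by (intro rk_ge) auto
  moreover have "card (K \<inter> A) + card (K \<inter> B) = card K + card (K \<inter> A \<inter> B)"
  proof -
    have "card ((K \<inter> A) \<union> (K \<inter> B)) + card ((K \<inter> A) \<inter> (K \<inter> B)) = card (K \<inter> A) + card (K \<inter> B)"
      using fK card_Un_Int[of "K \<inter> A" "K \<inter> B"] by auto
    moreover have "(K \<inter> A) \<union> (K \<inter> B) = K" using K by auto
    moreover have "(K \<inter> A) \<inter> (K \<inter> B) = K \<inter> A \<inter> B" by auto
    ultimately show ?thesis by simp
  qed
  moreover have "card J \<le> card (K \<inter> A \<inter> B)" using J K fK by (intro card_mono) auto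
  ultimately show ?thesis using J K by linarith
qed

lemma rk_union_le: "finite B \<Longrightarrow> r (A \<union> B) \<le> r A + card B"
proof -
  assume fB: "finite B"
  obtain K where K: "K \<in> Ind" "K \<subseteq> A \<union> B" "card K = r (A \<union> B)" using rk_obtain by blast
  have fK: "finite K" using K ind_fin by auto
  have "card (K - B) \<le> r A" using K ind_subset by (intro rk_ge) auto
  moreover have "card K \<le> card (K - B) + card B"
  proof -
    have "card K \<le> card ((K - B) \<union> B)" using fK fB by (intro card_mono) auto
    also have "\<dots> \<le> card (K - B) + card B" by (rule card_Un_le)
    finally show ?thesis .
  qed
  ultimately show ?thesis using K by linarith
qed

lemma rk_insert_le: "r (insert x A) \<le> Suc (r A)"
  using rk_union_le[of "{x}" A] by simp

lemma rk_aug: "r Z < r (Z \<union> Y) \<Longrightarrow> \<exists>y\<in>Y. r Z < r (insert y Z)"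
proof -
  assume lt: "r Z < r (Z \<union> Y)"
  obtain J where J: "J \<in> Ind" "J \<subseteq> Z" "card J = r Z" using rk_obtain by blast
  obtain K where K: "K \<in> Ind" "J \<subseteq> K" "K \<subseteq> Z \<union> Y" "card K = r (Z \<union> Y)"
    using extend[of J "Z \<union> Y"] J by auto
  have fJ: "finite J" using J ind_fin by auto
  have "\<not> K \<subseteq> J" using lt J K fJ by (metis card_mono leD)
  then obtain y where y: "y \<in> K" "y \<notin> J" by auto
  have iy: "insert y J \<in> Ind" using ind_subset K y by auto
  have cy: "card (insert y J) = Suc (r Z)" using fJ y J by simp
  show ?thesis
  proof (cases "y \<in> Z")
    case True
    hence "card (insert y J) \<le> r Z" using iy J by (intro rk_ge) auto
    thus ?thesis using cy by simp
  next
    case False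
    hence "y \<in> Y" using K y by auto
    moreover have "card (insert y J) \<le> r (insert y Z)" using iy J by (intro rk_ge) auto
    hence "r Z < r (insert y Z)" using cy by simp
    ultimately show ?thesis by blast
  qed
qed

lemma rk_span: assumes "\<And>y. y \<in> Y \<Longrightarrow> r (insert y Z) = r Z" shows "r (Z \<union> Y) = r Z"
proof (rule ccontr)
  assume "r (Z \<union> Y) \<noteq> r Z"
  hence "r Z < r (Z \<union> Y)" using rk_mono[of Z "Z \<union> Y"] by simp
  then obtain y where "y \<in> Y" "r Z < r (insert y Z)" using rk_aug by blast
  thus False using assms by simp
qed

lemma rk_span_mono: "C \<subseteq> A \<Longrightarrow> r (insert y C) = r C \<Longrightarrow> r (insert y A) = r A"
proof -
  assume CA: "C \<subseteq> A" and e: "r (insert y C) = r C"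
  have "A \<union> insert y C = insert y A" using CA by auto
  hence "r (insert y A) + r (A \<inter> insert y C) \<le> r A + r (insert y C)" using rk_submod[of A "insert y C"] by simp
  moreover have "r C \<le> r (A \<inter> insert y C)" using CA by (intro rk_mono) auto
  moreover have "r A \<le> r (insert y A)" by (intro rk_mono) auto
  ultimately show ?thesis using e by linarith
qed

lemma basis_span: "B \<subseteq> F \<Longrightarrow> B \<in> Ind \<Longrightarrow> card B = r F \<Longrightarrow> r (B \<union> Z) = r (F \<union> Z)"
proof -
  assume BF: "B \<subseteq> F" and B: "B \<in> Ind" and c: "card B = r F"
  have "\<And>y. y \<in> F \<Longrightarrow> r (insert y B) = r B"
  proof -
    fix y assume "y \<in> F"
    hence "r (insert y B) \<le> r F" using BF by (intro rk_mono) auto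
    moreover have "r B \<le> r (insert y B)" by (intro rk_mono) auto
    ultimately show "r (insert y B) = r B" using ind_rk[OF B] c by simp
  qed
  hence "\<And>y. y \<in> F \<Longrightarrow> r (insert y (B \<union> Z)) = r (B \<union> Z)"
    by (rule rk_span_mono[rotated]) auto
  hence "r ((B \<union> Z) \<union> F) = r (B \<union> Z)" by (rule rk_span)
  moreover have "(B \<union> Z) \<union> F = F \<union> Z" using BF by auto
  ultimately show ?thesis by metis
qed

end



definition PP :: "'a matroid \<Rightarrow> 'a set \<Rightarrow> bool" where
  "PP M X \<longleftrightarrow> X \<subseteq> fst M \<and> (\<forall>F. cyclic_flat M F \<longrightarrow> F \<subseteq> X \<or> X \<subseteq> F)"

definition splitI :: "'a matroid \<Rightarrow> 'a set \<Rightarrow> bool" where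
  "splitI M X \<longleftrightarrow> (\<forall>A. A \<subseteq> fst M \<and> A \<inter> X \<in> snd M \<and> card A \<le> rk M (A \<union> X) \<longrightarrow> A \<in> snd M)"

context mat begin

definition cl where "cl A = {x\<in>S. r (insert x A) = r A}"

lemma cl_sub: "A \<subseteq> S \<Longrightarrow> A \<subseteq> cl A"
  unfolding cl_def by (auto simp: insert_absorb)

lemma cl_S: "cl A \<subseteq> S" unfolding cl_def by auto

lemma rk_cl: "A \<subseteq> S \<Longrightarrow> r (cl A) = r A"
proof -
  assume A: "A \<subseteq> S"
  have "r (A \<union> cl A) = r A" by (rule rk_span) (simp add: cl_def)
  moreover have "A \<union> cl A = cl A" using cl_sub[OF A] by auto
  ultimately show ?thesis by simp
qed

lemma flat_cl: "A \<subseteq> S \<Longrightarrow> flat M (cl A)"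
  unfolding flat_def
proof (intro conjI ballI)
  assume A: "A \<subseteq> S"
  show "cl A \<subseteq> S" by (rule cl_S)
  fix x assume x: "x \<in> S - cl A"
  hence "r (insert x A) \<noteq> r A" unfolding cl_def by auto
  moreover have "r A \<le> r (insert x A)" by (intro rk_mono) auto
  moreover have "r (insert x A) \<le> r (insert x (cl A))" using cl_sub[OF A] by (intro rk_mono) auto
  ultimately show "r (cl A) < r (insert x (cl A))" using rk_cl[OF A] by simp
qed

lemma cyc_cl: assumes A: "A \<subseteq> S" and c: "\<forall>e\<in>A. r (A - {e}) = r A"
  shows "\<forall>e\<in>cl A. r (cl A - {e}) = r (cl A)"
proof
  fix e assume "e \<in> cl A"
  have "r (A - {e}) = r A" using c by (cases "e \<in> A") auto
  moreover have "r (A - {e}) \<le> r (cl A - {e})" using cl_sub[OF A] by (intro rk_mono) auto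
  moreover have "r (cl A - {e}) \<le> r (cl A)" by (intro rk_mono) auto
  ultimately show "r (cl A - {e}) = r (cl A)" using rk_cl[OF A] by simp
qed

lemma cl_rk_union: "C \<subseteq> A \<Longrightarrow> r (A \<union> cl C) = r A"
  by (rule rk_span) (auto simp: cl_def intro: rk_span_mono)

lemma dep_circuit: assumes X: "X \<subseteq> S" "X \<notin> Ind" shows "\<exists>C\<subseteq>X. circuit M C"
proof -
  let ?D = "{Y. Y \<subseteq> X \<and> Y \<notin> Ind}"
  have fX: "finite X" using X finS finite_subset by blast
  have "?D \<subseteq> Pow X" by auto
  hence fin: "finite ?D" using fX finite_subset by blast
  have ne: "?D \<noteq> {}" using X by auto
  obtain n where n: "n = Min (card ` ?D)" by simp
  have "n \<in> card ` ?D" using n fin ne by simp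
  then obtain C where C: "C \<in> ?D" "card C = n" by auto
  have mn: "\<And>Y. Y \<in> ?D \<Longrightarrow> card C \<le> card Y" using n C fin by simp
  have "circuit M C" unfolding circuit_def
  proof (intro conjI allI impI)
    show "C \<subseteq> S" using C X by auto
    show "C \<notin> Ind" using C by auto
    fix D assume "D \<subset> C"
    moreover have "finite C" using C fX finite_subset by blast
    ultimately have "card D < card C" by (simp add: psubset_card_mono)
    show "D \<in> Ind"
    proof (rule ccontr)
      assume "D \<notin> Ind"
      hence "D \<in> ?D" using C \<open>D \<subset> C\<close> by auto
      hence "card C \<le> card D" by (rule mn)
      thus False using \<open>card D < card C\<close> by simp
    qed
  qed
  thus ?thesis using C by auto
qed

lemma circuit_props: assumes C: "circuit M C"
  shows "C \<noteq> {}" "finite C" "r C < card C" "\<forall>e\<in>C. r (C - {e}) = r C"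
proof -
  show "C \<noteq> {}" using C ind_empty unfolding circuit_def by auto
  show fC: "finite C" using C finS finite_subset unfolding circuit_def by blast
  have "r C \<le> card C" using rk_le_card[OF fC] .
  moreover have "r C \<noteq> card C" using rk_card_ind[OF fC] C unfolding circuit_def by auto
  ultimately show lt: "r C < card C" by simp
  show "\<forall>e\<in>C. r (C - {e}) = r C"
  proof
    fix e assume e: "e \<in> C"
    have "C - {e} \<in> Ind" using C e unfolding circuit_def by auto
    hence "r (C - {e}) = card C - 1" using ind_rk fC e by simp
    moreover have "r (C - {e}) \<le> r C" by (intro rk_mono) auto
    ultimately show "r (C - {e}) = r C" using lt by simp
  qed
qed

lemma cf_iff: "cyclic_flat M F \<longleftrightarrow> flat M F \<and> (\<forall>e\<in>F. r (F - {e}) = r F)"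
proof
  assume cf: "cyclic_flat M F"
  hence fl: "flat M F" unfolding cyclic_flat_def by auto
  have "\<forall>e\<in>F. r (F - {e}) = r F"
  proof
    fix e assume e: "e \<in> F"
    then obtain C where C: "circuit M C" "C \<subseteq> F" "e \<in> C" using cf unfolding cyclic_flat_def by blast
    have "(F - {e}) \<union> C = F" using C e by auto
    moreover have "(F - {e}) \<inter> C = C - {e}" using C by auto
    ultimately have "r F + r (C - {e}) \<le> r (F - {e}) + r C" using rk_submod[of "F - {e}" C] by simp
    moreover have "r (C - {e}) = r C" using circuit_props(4)[OF C(1)] C(3) by simp
    moreover have "r (F - {e}) \<le> r F" by (intro rk_mono) auto
    ultimately show "r (F - {e}) = r F" by simp
  qed
  thus "flat M F \<and> (\<forall>e\<in>F. r (F - {e}) = r F)" using fl by simp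
next
  assume h: "flat M F \<and> (\<forall>e\<in>F. r (F - {e}) = r F)"
  hence FS: "F \<subseteq> S" unfolding flat_def by auto
  have "F \<subseteq> \<Union>{C. circuit M C \<and> C \<subseteq> F}"
  proof
    fix e assume e: "e \<in> F"
    obtain B where B: "B \<in> Ind" "B \<subseteq> F - {e}" "card B = r (F - {e})" using rk_obtain by blast
    have fB: "finite B" using B ind_fin by auto
    have eB: "e \<notin> B" using B by auto
    have "insert e B \<notin> Ind"
    proof
      assume "insert e B \<in> Ind"
      hence "card (insert e B) \<le> r F" using B e by (intro rk_ge) auto
      thus False using fB eB B h e by simp
    qed
    moreover have "insert e B \<subseteq> S" using B e FS by auto
    ultimately obtain C where C: "C \<subseteq> insert e B" "circuit M C" using dep_circuit by blast
    have "e \<in> C"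
    proof (rule ccontr)
      assume "e \<notin> C"
      hence "C \<subseteq> B" using C by auto
      hence "C \<in> Ind" using ind_subset B by auto
      thus False using C unfolding circuit_def by auto
    qed
    moreover have "C \<subseteq> F" using C B e by auto
    ultimately show "e \<in> \<Union>{C. circuit M C \<and> C \<subseteq> F}" using C by auto
  qed
  thus "cyclic_flat M F" using h unfolding cyclic_flat_def by auto
qed

lemma split_iff_PP: assumes XS: "X \<subseteq> S" shows "splitI M X \<longleftrightarrow> PP M X"
proof
  assume sp: "splitI M X"
  show "PP M X" unfolding PP_def
  proof (intro conjI allI impI XS)
    fix F assume cf: "cyclic_flat M F"
    show "F \<subseteq> X \<or> X \<subseteq> F"
    proof (rule ccontr)
      assume "\<not> (F \<subseteq> X \<or> X \<subseteq> F)"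
      then obtain e x where e: "e \<in> F" "e \<notin> X" and x: "x \<in> X" "x \<notin> F" by auto
      have fl: "flat M F" and cy: "r (F - {e}) = r F" using cf cf_iff e by auto
      have FS: "F \<subseteq> S" using fl unfolding flat_def by auto
      obtain B where B: "B \<in> Ind" "B \<subseteq> F - {e}" "card B = r (F - {e})" using rk_obtain by blast
      have fB: "finite B" using B ind_fin by auto
      have eB: "e \<notin> B" using B by auto
      let ?A = "insert e B"
      have AS: "?A \<subseteq> S" using B e FS by auto
      have "?A \<inter> X \<subseteq> B" using e by auto
      hence AX: "?A \<inter> X \<in> Ind" using B ind_subset by auto
      have "r (insert x F) \<le> r (F \<union> X)" using x by (intro rk_mono) auto
      moreover have "r F < r (insert x F)" using fl x XS unfolding flat_def by auto
      moreover have "r (F \<union> X) \<le> r ((F - {e}) \<union> X)"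
      proof -
        have "insert e (F - {e}) = F" using e by auto
        hence "r (insert e (F - {e})) = r (F - {e})" using cy by simp
        hence "r (insert e ((F - {e}) \<union> X)) = r ((F - {e}) \<union> X)" by (rule rk_span_mono[rotated]) auto
        moreover have "insert e ((F - {e}) \<union> X) = F \<union> X" using e by auto
        ultimately show ?thesis by simp
      qed
      moreover have "r (B \<union> X) = r ((F - {e}) \<union> X)" using basis_span[of B "F - {e}" X] B by simp
      moreover have "card ?A = Suc (r F)" using fB B eB cy by simp
      moreover have "r (B \<union> X) \<le> r (?A \<union> X)" by (intro rk_mono) auto
      ultimately have "card ?A \<le> r (?A \<union> X)" by linarith
      hence "?A \<in> Ind" using sp AS AX unfolding splitI_def by blast
      hence "card ?A \<le> r F" using B e by (intro rk_ge) auto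
      thus False using fB B eB cy by simp
    qed
  qed
next
  assume pp: "PP M X"
  show "splitI M X" unfolding splitI_def
  proof (intro allI impI)
    fix A assume A: "A \<subseteq> S \<and> A \<inter> X \<in> Ind \<and> card A \<le> r (A \<union> X)"
    show "A \<in> Ind"
    proof (rule ccontr)
      assume nA: "A \<notin> Ind"
      then obtain C where C: "C \<subseteq> A" "circuit M C" using dep_circuit A by blast
      have CS: "C \<subseteq> S" using C unfolding circuit_def by auto
      have "cyclic_flat M (cl C)" unfolding cf_iff
        using flat_cl[OF CS] cyc_cl[OF CS] circuit_props(4)[OF C(2)] by simp
      moreover have "\<not> C \<subseteq> X"
      proof
        assume "C \<subseteq> X" hence "C \<subseteq> A \<inter> X" using C by auto
        hence "C \<in> Ind" using A ind_subset by blast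
        thus False using C unfolding circuit_def by auto
      qed
      hence "\<not> cl C \<subseteq> X" using cl_sub[OF CS] by auto
      ultimately have "X \<subseteq> cl C" using pp unfolding PP_def by blast
      hence "r (A \<union> X) \<le> r (A \<union> cl C)" by (intro rk_mono) auto
      also have "\<dots> = r A" using cl_rk_union[OF C(1)] .
      finally have "card A \<le> r A" using A by simp
      moreover have "finite A" using A finS finite_subset by blast
      ultimately have "r A = card A" using rk_le_card by (simp add: le_antisym)
      thus False using rk_card_ind \<open>finite A\<close> nA by blast
    qed
  qed
qed

end



lemma rk_le_gen: "finite {I \<in> snd N. I \<subseteq> X} \<Longrightarrow> {} \<in> snd N \<Longrightarrow> (\<And>I. I \<in> snd N \<Longrightarrow> I \<subseteq> X \<Longrightarrow> card I \<le> k) \<Longrightarrow> rk N X \<le> k"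
proof -
  assume f: "finite {I \<in> snd N. I \<subseteq> X}" and e: "{} \<in> snd N" and h: "\<And>I. I \<in> snd N \<Longrightarrow> I \<subseteq> X \<Longrightarrow> card I \<le> k"
  have "{I \<in> snd N. I \<subseteq> X} \<noteq> {}" using e by auto
  thus ?thesis unfolding rk_def using f h by (subst Max_le_iff) auto
qed

lemma rk_ge_gen: "finite {I \<in> snd N. I \<subseteq> X} \<Longrightarrow> I \<in> snd N \<Longrightarrow> I \<subseteq> X \<Longrightarrow> card I \<le> rk N X"
  unfolding rk_def by (intro Max_ge) auto

context mat begin

lemma fin_sub: "X \<subseteq> S \<Longrightarrow> finite X" using finS finite_subset by auto

lemma minor_rk: assumes YS: "Y \<subseteq> S" and ZS: "Z \<subseteq> S" and X: "X \<subseteq> Z - Y"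
  shows "rk (minor M Y Z) X = r (X \<union> Y) - r Y"
proof -
  let ?N = "minor M Y Z"
  have "X \<subseteq> S" using X ZS by auto
  hence fX: "finite X" using finS finite_subset by auto
  have "{I \<in> snd ?N. I \<subseteq> X} \<subseteq> Pow X" by auto
  hence fin: "finite {I \<in> snd ?N. I \<subseteq> X}" using fX finite_subset by blast
  have e: "{} \<in> snd ?N" unfolding minor_def by (simp add: rk_empty)
  have "rk ?N X \<le> r (X \<union> Y) - r Y"
  proof (rule rk_le_gen[OF fin e])
    fix I assume I: "I \<in> snd ?N" "I \<subseteq> X"
    hence "r (I \<union> Y) = card I + r Y" unfolding minor_def by auto
    moreover have "r (I \<union> Y) \<le> r (X \<union> Y)" using I by (intro rk_mono) auto
    ultimately show "card I \<le> r (X \<union> Y) - r Y" by simp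
  qed
  moreover have "r (X \<union> Y) - r Y \<le> rk ?N X"
  proof -
    obtain J where J: "J \<in> Ind" "J \<subseteq> Y" "card J = r Y" using rk_obtain by blast
    obtain K where K: "K \<in> Ind" "J \<subseteq> K" "K \<subseteq> X \<union> Y" "card K = r (X \<union> Y)"
      using extend[of J "X \<union> Y"] J by auto
    have fK: "finite K" using K ind_fin by auto
    let ?I = "K - Y"
    have IX: "?I \<subseteq> X" using K by auto
    have "card K \<le> r (?I \<union> Y)" using K by (intro rk_ge) auto
    moreover have "r (?I \<union> Y) \<le> r (X \<union> Y)" using IX by (intro rk_mono) auto
    ultimately have e1: "r (?I \<union> Y) = r (X \<union> Y)" using K by simp
    have "card (K \<inter> Y) \<le> r Y" using K ind_subset by (intro rk_ge) auto
    moreover have "card J \<le> card (K \<inter> Y)" using J K fK by (intro card_mono) auto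
    ultimately have e2: "card (K \<inter> Y) = r Y" using J by simp
    have e3: "card ?I = card K - card (K \<inter> Y)" using fK by (simp add: card_Diff_subset_Int)
    have "card (K \<inter> Y) \<le> card K" using fK by (intro card_mono) auto
    hence "card ?I = r (X \<union> Y) - r Y" using e2 e3 K by simp
    moreover have "r (?I \<union> Y) = card ?I + r Y" using e1 e2 e3 K \<open>card (K \<inter> Y) \<le> card K\<close> by simp
    hence "?I \<in> snd ?N" using IX X unfolding minor_def by auto
    hence "card ?I \<le> rk ?N X" using IX fin by (intro rk_ge_gen) auto
    ultimately show ?thesis by simp
  qed
  ultimately show ?thesis by simp
qed

lemma minor_mat: assumes YZ: "Y \<subseteq> Z" and ZS: "Z \<subseteq> S" shows "matroid (minor M Y Z)"
  unfolding matroid_def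
proof (intro conjI allI impI)
  let ?N = "minor M Y Z"
  have YS: "Y \<subseteq> S" using YZ ZS by auto
  show "finite (fst ?N)" unfolding minor_def using ZS by (intro fin_sub) auto
  show "snd ?N \<subseteq> Pow (fst ?N)" unfolding minor_def by auto
  show "{} \<in> snd ?N" unfolding minor_def by (simp add: rk_empty)
  fix X X' 
  {
    assume h: "X \<in> snd ?N \<and> X' \<subseteq> X"
    hence X: "X \<subseteq> Z - Y" "r (X \<union> Y) = card X + r Y" unfolding minor_def by auto
    have fX: "finite X" using X ZS by (intro fin_sub) auto
    have X': "X' \<subseteq> X" using h by auto
    have "r (Y \<union> X') \<le> r Y + card X'" using fX X' finite_subset by (intro rk_union_le) auto
    moreover have "r ((X' \<union> Y) \<union> (X - X')) \<le> r (X' \<union> Y) + card (X - X')" using fX by (intro rk_union_le) auto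
    moreover have "(X' \<union> Y) \<union> (X - X') = X \<union> Y" using X' by auto
    moreover have "card X = card X' + card (X - X')"
    proof -
      have "finite X'" using fX X' finite_subset by blast
      thus ?thesis using fX X' card_Un_disjoint[of X' "X - X'"] by (simp add: Un_absorb1)
    qed
    moreover have "Y \<union> X' = X' \<union> Y" by auto
    ultimately have "r (X' \<union> Y) = card X' + r Y" using X by simp
    thus "X' \<in> snd ?N" using X X' unfolding minor_def by auto
  }
  {
    assume h: "X \<in> snd ?N \<and> X' \<in> snd ?N \<and> card X < card X'"
    hence X: "X \<subseteq> Z - Y" "r (X \<union> Y) = card X + r Y" and X2: "X' \<subseteq> Z - Y" "r (X' \<union> Y) = card X' + r Y"
      unfolding minor_def by auto
    have fX: "finite X" using X ZS by (intro fin_sub) auto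
    have "r (X \<union> Y) < r ((X \<union> Y) \<union> X')"
    proof -
      have "r (X' \<union> Y) \<le> r ((X \<union> Y) \<union> X')" by (intro rk_mono) auto
      thus ?thesis using X X2 h by simp
    qed
    then obtain y where y: "y \<in> X'" "r (X \<union> Y) < r (insert y (X \<union> Y))" using rk_aug by blast
    have yn: "y \<notin> X \<union> Y" using y by (auto simp: insert_absorb)
    have "r (insert y (X \<union> Y)) \<le> Suc (r (X \<union> Y))" by (rule rk_insert_le)
    hence "r (insert y X \<union> Y) = card (insert y X) + r Y" using y yn X fX by simp
    moreover have "insert y X \<subseteq> Z - Y" using X X2 y by auto
    ultimately have "insert y X \<in> snd ?N" unfolding minor_def by auto
    thus "\<exists>y\<in>X' - X. insert y X \<in> snd ?N" using y yn by auto
  }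
qed

lemma minor_minor: assumes YZ: "Y \<subseteq> Z" and ZS: "Z \<subseteq> S" and CD: "C \<subseteq> D" and DZ: "D \<subseteq> Z - Y"
  shows "minor (minor M Y Z) C D = minor M (Y \<union> C) (Y \<union> D)"
proof -
  have YS: "Y \<subseteq> S" using YZ ZS by auto
  have 1: "D - C = (Y \<union> D) - (Y \<union> C)" using DZ by auto
  have "\<And>X. X \<subseteq> D - C \<Longrightarrow> (rk (minor M Y Z) (X \<union> C) = card X + rk (minor M Y Z) C) = (r (X \<union> (Y \<union> C)) = card X + r (Y \<union> C))"
  proof -
    fix X assume X: "X \<subseteq> D - C"
    have "rk (minor M Y Z) (X \<union> C) = r (X \<union> C \<union> Y) - r Y" using X CD DZ by (intro minor_rk YS ZS) auto
    moreover have "rk (minor M Y Z) C = r (C \<union> Y) - r Y" using CD DZ by (intro minor_rk YS ZS) auto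
    moreover have "r Y \<le> r (C \<union> Y)" by (intro rk_mono) auto
    moreover have "r (C \<union> Y) \<le> r (X \<union> C \<union> Y)" by (intro rk_mono) auto
    moreover have "X \<union> C \<union> Y = X \<union> (Y \<union> C)" "C \<union> Y = Y \<union> C" by auto
    ultimately show "(rk (minor M Y Z) (X \<union> C) = card X + rk (minor M Y Z) C) = (r (X \<union> (Y \<union> C)) = card X + r (Y \<union> C))"
      by auto
  qed
  hence "{X. X \<subseteq> D - C \<and> rk (minor M Y Z) (X \<union> C) = card X + rk (minor M Y Z) C}
       = {X. X \<subseteq> (Y \<union> D) - (Y \<union> C) \<and> r (X \<union> (Y \<union> C)) = card X + r (Y \<union> C)}" using 1 by auto
  thus ?thesis unfolding minor_def[of "minor M Y Z"] minor_def[of M "Y \<union> C"] using 1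
    by (simp add: minor_def[of M Y Z])
qed

lemma minor_id: "minor M {} S = M"
proof -
  have "snd (minor M {} S) = Ind"
  proof (rule set_eqI)
    fix X
    show "X \<in> snd (minor M {} S) \<longleftrightarrow> X \<in> Ind"
    proof
      assume "X \<in> snd (minor M {} S)"
      hence X: "X \<subseteq> S" "r X = card X" unfolding minor_def by (auto simp: rk_empty)
      have "finite X" using X by (intro fin_sub) auto
      thus "X \<in> Ind" using rk_card_ind X by blast
    next
      assume "X \<in> Ind"
      thus "X \<in> snd (minor M {} S)" unfolding minor_def using ind_rk ind_sub by (auto simp: rk_empty)
    qed
  qed
  moreover have "fst (minor M {} S) = S" unfolding minor_def by simp
  ultimately show ?thesis by (simp add: prod_eq_iff)
qed

end



context mat begin

lemma fp_minors: assumes YW: "Y \<subseteq> W" and WZ: "W \<subseteq> Z" and ZS: "Z \<subseteq> S"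
  shows "free_prod (minor M Y W) (minor M W Z) = (Z - Y, {A. A \<subseteq> Z - Y \<and> r ((A \<inter> W) \<union> Y) = card (A \<inter> W) + r Y \<and> card A + r Y \<le> r (A \<union> W)})"
proof -
  let ?N1 = "minor M Y W" and ?N2 = "minor M W Z"
  have YS: "Y \<subseteq> S" and WS: "W \<subseteq> S" using YW WZ ZS by auto
  have f1: "fst ?N1 = W - Y" and f2: "fst ?N2 = Z - W" unfolding minor_def by auto
  have U: "fst ?N1 \<union> fst ?N2 = Z - Y" using f1 f2 YW WZ by auto
  have key: "\<And>A. A \<subseteq> Z - Y \<Longrightarrow> (A \<inter> fst ?N1 \<in> snd ?N1 \<and> nu ?N2 (A \<inter> fst ?N2) \<le> lam ?N1 (A \<inter> fst ?N1))
     \<longleftrightarrow> (r ((A \<inter> W) \<union> Y) = card (A \<inter> W) + r Y \<and> card A + r Y \<le> r (A \<union> W))"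
  proof -
    fix A assume A: "A \<subseteq> Z - Y"
    have fA: "finite A" using A ZS by (intro fin_sub) auto
    have a1: "A \<inter> fst ?N1 = A \<inter> W" using A f1 by auto
    have a2: "A \<inter> fst ?N2 = A - W" using A f2 by auto
    have i1: "A \<inter> W \<in> snd ?N1 \<longleftrightarrow> r ((A \<inter> W) \<union> Y) = card (A \<inter> W) + r Y" unfolding minor_def using A by auto
    have lam1: "lam ?N1 (A \<inter> W) = (r W - r Y) - (r ((A \<inter> W) \<union> Y) - r Y)"
    proof -
      have "rk ?N1 (W - Y) = r ((W - Y) \<union> Y) - r Y" using YS WS by (intro minor_rk) auto
      moreover have "(W - Y) \<union> Y = W" using YW by auto
      moreover have "rk ?N1 (A \<inter> W) = r ((A \<inter> W) \<union> Y) - r Y" using YS WS A by (intro minor_rk) auto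
      ultimately show ?thesis unfolding lam_def f1 by simp
    qed
    have nu2: "nu ?N2 (A - W) = card (A - W) - (r (A \<union> W) - r W)"
    proof -
      have "rk ?N2 (A - W) = r ((A - W) \<union> W) - r W" using WS ZS A by (intro minor_rk) auto
      moreover have "(A - W) \<union> W = A \<union> W" by auto
      ultimately show ?thesis unfolding nu_def by simp
    qed
    have c: "card A = card (A \<inter> W) + card (A - W)"
      using fA card_Un_disjoint[of "A \<inter> W" "A - W"] by (metis Int_Diff_Un Int_Diff_disjoint finite_Diff finite_Int)
    have m1: "r Y \<le> r ((A \<inter> W) \<union> Y)" by (intro rk_mono) auto
    have m2: "r ((A \<inter> W) \<union> Y) \<le> r W" using YW by (intro rk_mono) auto
    have m3: "r W \<le> r (A \<union> W)" by (intro rk_mono) auto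
    have m4: "r (W \<union> (A - W)) \<le> r W + card (A - W)" using fA by (intro rk_union_le) auto
    have "W \<union> (A - W) = A \<union> W" by auto
    hence m4': "r (A \<union> W) \<le> r W + card (A - W)" using m4 by simp
    show "?thesis A" unfolding a1 a2 i1 lam1 nu2 using c m1 m2 m3 m4' by auto
  qed
  show ?thesis unfolding free_prod_def U using key by auto
qed

lemma three_term: assumes YW: "Y \<subseteq> W" and WZ: "W \<subseteq> Z" and ZS: "Z \<subseteq> S" and sp: "splitI M W"
  shows "minor M Y Z = free_prod (minor M Y W) (minor M W Z)"
proof -
  have YS: "Y \<subseteq> S" and WS: "W \<subseteq> S" using YW WZ ZS by auto
  have "\<And>A. A \<subseteq> Z - Y \<Longrightarrow> r (A \<union> Y) = card A + r Y \<longleftrightarrow> (r ((A \<inter> W) \<union> Y) = card (A \<inter> W) + r Y \<and> card A + r Y \<le> r (A \<union> W))"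
  proof -
    fix A assume A: "A \<subseteq> Z - Y"
    have fA: "finite A" using A ZS by (intro fin_sub) auto
    have c: "card A = card (A \<inter> W) + card (A - W)"
      using fA card_Un_disjoint[of "A \<inter> W" "A - W"] by (metis Int_Diff_Un Int_Diff_disjoint finite_Diff finite_Int)
    show "?thesis A"
    proof
      assume h: "r (A \<union> Y) = card A + r Y"
      have u1: "r (Y \<union> (A \<inter> W)) \<le> r Y + card (A \<inter> W)" using fA by (intro rk_union_le) auto
      have u2: "r (((A \<inter> W) \<union> Y) \<union> (A - W)) \<le> r ((A \<inter> W) \<union> Y) + card (A - W)" using fA by (intro rk_union_le) auto
      have "((A \<inter> W) \<union> Y) \<union> (A - W) = A \<union> Y" by auto
      hence u2': "r (A \<union> Y) \<le> r ((A \<inter> W) \<union> Y) + card (A - W)" using u2 by simp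
      have "Y \<union> (A \<inter> W) = (A \<inter> W) \<union> Y" by auto
      hence e1: "r ((A \<inter> W) \<union> Y) = card (A \<inter> W) + r Y" using u1 u2' h c by simp
      have "r (A \<union> Y) \<le> r (A \<union> W)" using YW by (intro rk_mono) auto
      thus "r ((A \<inter> W) \<union> Y) = card (A \<inter> W) + r Y \<and> card A + r Y \<le> r (A \<union> W)" using e1 h by simp
    next
      assume h: "r ((A \<inter> W) \<union> Y) = card (A \<inter> W) + r Y \<and> card A + r Y \<le> r (A \<union> W)"
      obtain B where B: "B \<in> Ind" "B \<subseteq> Y" "card B = r Y" using rk_obtain by blast
      have fB: "finite B" using B ind_fin by auto
      have dB: "B \<inter> A = {}" using A B by auto
      have "B \<union> (A \<inter> W) \<subseteq> S" using B YS A ZS by auto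
      have "r (B \<union> (A \<inter> W)) = r (Y \<union> (A \<inter> W))" using basis_span[of B Y "A \<inter> W"] B by simp
      also have "Y \<union> (A \<inter> W) = (A \<inter> W) \<union> Y" by auto
      finally have "r (B \<union> (A \<inter> W)) = card (A \<inter> W) + card B" using h B by simp
      moreover have "card (B \<union> (A \<inter> W)) = card B + card (A \<inter> W)" using fB fA dB by (intro card_Un_disjoint) auto
      ultimately have "B \<union> (A \<inter> W) \<in> Ind" using fB fA by (intro rk_card_ind) auto
      moreover have "(B \<union> A) \<inter> W = B \<union> (A \<inter> W)" using B YW by auto
      ultimately have i1: "(B \<union> A) \<inter> W \<in> Ind" by simp
      have cBA: "card (B \<union> A) = card B + card A" using fB fA dB by (intro card_Un_disjoint) auto
      have "(B \<union> A) \<union> W = A \<union> W" using B YW by auto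
      hence "card (B \<union> A) \<le> r ((B \<union> A) \<union> W)" using h cBA B by simp
      moreover have "B \<union> A \<subseteq> S" using B YS A ZS by auto
      ultimately have "B \<union> A \<in> Ind" using sp i1 unfolding splitI_def by blast
      hence "r (B \<union> A) = card B + card A" using ind_rk cBA by simp
      moreover have "r (B \<union> A) = r (Y \<union> A)" using basis_span[of B Y A] B by simp
      moreover have "Y \<union> A = A \<union> Y" by auto
      ultimately show "r (A \<union> Y) = card A + r Y" using B by simp
    qed
  qed
  hence "snd (minor M Y Z) = {A. A \<subseteq> Z - Y \<and> r ((A \<inter> W) \<union> Y) = card (A \<inter> W) + r Y \<and> card A + r Y \<le> r (A \<union> W)}"
    unfolding minor_def by auto
  moreover have "fst (minor M Y Z) = Z - Y" unfolding minor_def by simp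
  ultimately show ?thesis unfolding fp_minors[OF YW WZ ZS] by (simp add: prod_eq_iff)
qed

lemma fpsplit_iff: assumes WS: "W \<subseteq> S"
  shows "M = free_prod (minor M {} W) (minor M W S) \<longleftrightarrow> splitI M W"
proof
  assume h: "M = free_prod (minor M {} W) (minor M W S)"
  have e: "free_prod (minor M {} W) (minor M W S) = (S - {}, {A. A \<subseteq> S - {} \<and> r ((A \<inter> W) \<union> {}) = card (A \<inter> W) + r {} \<and> card A + r {} \<le> r (A \<union> W)})"
    using WS by (intro fp_minors) auto
  have "Ind = {A. A \<subseteq> S - {} \<and> r ((A \<inter> W) \<union> {}) = card (A \<inter> W) + r {} \<and> card A + r {} \<le> r (A \<union> W)}"
    using arg_cong[OF h, of snd] unfolding e by simp
  hence I: "Ind = {A. A \<subseteq> S \<and> r (A \<inter> W) = card (A \<inter> W) \<and> card A \<le> r (A \<union> W)}" by (simp add: rk_empty)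
  show "splitI M W" unfolding splitI_def
  proof (intro allI impI)
    fix A assume A: "A \<subseteq> S \<and> A \<inter> W \<in> Ind \<and> card A \<le> r (A \<union> W)"
    hence "r (A \<inter> W) = card (A \<inter> W)" using ind_rk by blast
    thus "A \<in> Ind" using A I by blast
  qed
next
  assume "splitI M W"
  hence "minor M {} S = free_prod (minor M {} W) (minor M W S)" using WS by (intro three_term) auto
  thus "M = free_prod (minor M {} W) (minor M W S)" using minor_id by simp
qed

end



context mat begin

lemma minor_mat': "Y \<subseteq> Z \<Longrightarrow> Z \<subseteq> S \<Longrightarrow> mat (minor M Y Z)"
  unfolding mat_def by (rule minor_mat)

lemma mat_M: "mat M" by (rule mat_axioms)

lemma circ_cf: "circuit M C \<Longrightarrow> cyclic_flat M (cl C)"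
proof -
  assume C: "circuit M C"
  have CS: "C \<subseteq> S" using C unfolding circuit_def by auto
  show ?thesis unfolding cf_iff
    using flat_cl[OF CS] cyc_cl[OF CS] circuit_props(4)[OF C] by simp
qed

lemma T1: assumes YW: "Y \<subseteq> W" and WZ: "W \<subseteq> Z" and ZS: "Z \<subseteq> S" and sp: "splitI M W"
  shows "splitI (minor M Y Z) (W - Y)"
proof -
  let ?N = "minor M Y Z"
  interpret N: mat ?N using YW WZ ZS by (intro minor_mat') auto
  have fN: "fst ?N = Z - Y" unfolding minor_def by simp
  have "?N = free_prod (minor M Y W) (minor M W Z)" using YW WZ ZS sp by (rule three_term)
  moreover have "minor ?N {} (W - Y) = minor M Y W"
  proof -
    have "minor ?N {} (W - Y) = minor M (Y \<union> {}) (Y \<union> (W - Y))"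
      using YW WZ ZS by (intro minor_minor) auto
    moreover have "Y \<union> {} = Y" "Y \<union> (W - Y) = W" using YW by auto
    ultimately show ?thesis by simp
  qed
  moreover have "minor ?N (W - Y) (Z - Y) = minor M W Z"
  proof -
    have "minor ?N (W - Y) (Z - Y) = minor M (Y \<union> (W - Y)) (Y \<union> (Z - Y))"
      using YW WZ ZS by (intro minor_minor) auto
    moreover have "Y \<union> (W - Y) = W" "Y \<union> (Z - Y) = Z" using YW WZ by auto
    ultimately show ?thesis by simp
  qed
  ultimately have "?N = free_prod (minor ?N {} (W - Y)) (minor ?N (W - Y) (fst ?N))" using fN by simp
  thus ?thesis using N.fpsplit_iff[of "W - Y"] fN WZ by auto
qed

lemma T1P: assumes YW: "Y \<subseteq> W" and WZ: "W \<subseteq> Z" and ZS: "Z \<subseteq> S" and pp: "PP M W"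
  shows "PP (minor M Y Z) (W - Y)"
proof -
  interpret N: mat "minor M Y Z" using YW WZ ZS by (intro minor_mat') auto
  have "splitI M W" using split_iff_PP[of W] pp WZ ZS by auto
  hence "splitI (minor M Y Z) (W - Y)" using T1 YW WZ ZS by blast
  moreover have "W - Y \<subseteq> fst (minor M Y Z)" using WZ unfolding minor_def by auto
  ultimately show ?thesis using N.split_iff_PP by blast
qed

lemma CFT: assumes YF: "Y \<subseteq> F" and FZ: "F \<subseteq> Z" and ZS: "Z \<subseteq> S" and cf: "cyclic_flat M F"
  shows "cyclic_flat (minor M Y Z) (F - Y)"
proof -
  let ?N = "minor M Y Z"
  interpret N: mat ?N using YF FZ ZS by (intro minor_mat') auto
  have YS: "Y \<subseteq> S" using YF FZ ZS by auto
  have fl: "flat M F" and cy: "\<forall>e\<in>F. r (F - {e}) = r F" using cf cf_iff by auto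
  have fN: "fst ?N = Z - Y" unfolding minor_def by simp
  have "flat ?N (F - Y)" unfolding flat_def
  proof (intro conjI ballI)
    show "F - Y \<subseteq> fst ?N" using fN FZ by auto
    fix x assume x: "x \<in> fst ?N - (F - Y)"
    hence xS: "x \<in> S - F" using fN ZS by auto
    have "rk ?N (insert x (F - Y)) = r (insert x (F - Y) \<union> Y) - r Y"
      using x fN FZ by (intro minor_rk YS ZS) auto
    moreover have "insert x (F - Y) \<union> Y = insert x F" using YF by auto
    moreover have "rk ?N (F - Y) = r ((F - Y) \<union> Y) - r Y" using FZ by (intro minor_rk YS ZS) auto
    moreover have "(F - Y) \<union> Y = F" using YF by auto
    moreover have "r F < r (insert x F)" using fl xS unfolding flat_def by auto
    moreover have "r Y \<le> r F" using YF by (intro rk_mono)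
    ultimately show "rk ?N (F - Y) < rk ?N (insert x (F - Y))" by simp
  qed
  moreover have "\<forall>e\<in>F - Y. rk ?N (F - Y - {e}) = rk ?N (F - Y)"
  proof
    fix e assume e: "e \<in> F - Y"
    have "rk ?N (F - Y - {e}) = r ((F - Y - {e}) \<union> Y) - r Y" using FZ by (intro minor_rk YS ZS) auto
    moreover have "(F - Y - {e}) \<union> Y = F - {e}" using YF e by auto
    moreover have "rk ?N (F - Y) = r ((F - Y) \<union> Y) - r Y" using FZ by (intro minor_rk YS ZS) auto
    moreover have "(F - Y) \<union> Y = F" using YF by auto
    ultimately show "rk ?N (F - Y - {e}) = rk ?N (F - Y)" using cy e by simp
  qed
  ultimately show ?thesis using N.cf_iff by simp
qed

lemma T2: assumes YZ: "Y \<subseteq> Z" and ZS: "Z \<subseteq> S" and pY: "PP M Y" and pZ: "PP M Z"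
  and WZ: "W \<subseteq> Z - Y" and pW: "PP (minor M Y Z) W"
  shows "PP M (Y \<union> W)"
  unfolding PP_def
proof (intro conjI allI impI)
  show "Y \<union> W \<subseteq> S" using YZ ZS WZ by auto
  fix F assume cf: "cyclic_flat M F"
  show "F \<subseteq> Y \<union> W \<or> Y \<union> W \<subseteq> F"
  proof (cases "F \<subseteq> Y")
    case True thus ?thesis by auto
  next
    case False
    hence YF: "Y \<subseteq> F" using pY cf unfolding PP_def by blast
    show ?thesis
    proof (cases "Z \<subseteq> F")
      case True thus ?thesis using WZ YF YZ by auto
    next
      case False
      hence FZ: "F \<subseteq> Z" using pZ cf unfolding PP_def by blast
      have "cyclic_flat (minor M Y Z) (F - Y)" using YF FZ ZS cf by (rule CFT)
      hence "F - Y \<subseteq> W \<or> W \<subseteq> F - Y" using pW unfolding PP_def by blast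
      thus ?thesis using YF by auto
    qed
  qed
qed

lemma UA: assumes h: "\<forall>F. cyclic_flat M F \<longrightarrow> F = {} \<or> F = S" shows "uniform M"
  unfolding uniform_def
proof (intro exI[of _ "r S"] set_eqI iffI)
  fix X assume X: "X \<in> Ind"
  hence "card X \<le> r S" using ind_sub by (intro rk_ge) auto
  thus "X \<in> {X. X \<subseteq> S \<and> card X \<le> r S}" using X ind_sub by auto
next
  fix X assume X: "X \<in> {X. X \<subseteq> S \<and> card X \<le> r S}"
  show "X \<in> Ind"
  proof (rule ccontr)
    assume "X \<notin> Ind"
    then obtain C where C: "C \<subseteq> X" "circuit M C" using dep_circuit X by blast
    have CS: "C \<subseteq> S" using C unfolding circuit_def by auto
    have "cl C \<noteq> {}" using cl_sub[OF CS] circuit_props(1)[OF C(2)] by auto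
    hence "cl C = S" using h circ_cf[OF C(2)] by blast
    hence "r S = r C" using rk_cl[OF CS] by simp
    moreover have "r C < card C" using circuit_props(3)[OF C(2)] .
    moreover have "card C \<le> card X" using C X by (intro card_mono fin_sub) auto
    ultimately show False using X by simp
  qed
qed

lemma UB: assumes u: "uniform M" and cf: "cyclic_flat M F" shows "F = {} \<or> F = S"
proof (rule ccontr)
  assume nF: "\<not> (F = {} \<or> F = S)"
  obtain k where k: "Ind = {X. X \<subseteq> S \<and> card X \<le> k}" using u unfolding uniform_def by auto
  have fl: "flat M F" and cy: "\<forall>e\<in>F. r (F - {e}) = r F" using cf cf_iff by auto
  have FS: "F \<subseteq> S" using fl unfolding flat_def by auto
  have fF: "finite F" using FS by (rule fin_sub)
  obtain e where e: "e \<in> F" using nF by auto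
  obtain x where x: "x \<in> S - F" using nF FS by auto
  show False
  proof (cases "card F \<le> k")
    case True
    hence "F \<in> Ind" using k FS by auto
    have "F - {e} \<in> Ind" using \<open>F \<in> Ind\<close> by (rule ind_subset) auto
    hence "r (F - {e}) = card F - 1" using ind_rk fF e by simp
    moreover have "r F = card F" using \<open>F \<in> Ind\<close> by (rule ind_rk)
    moreover have "card F > 0" using fF e card_gt_0_iff by blast
    ultimately show False using cy e by auto
  next
    case False
    have "k \<le> card F" using False by simp
    then obtain T where T: "T \<subseteq> F" "card T = k" using obtain_subset_with_card_n[of k F] by blast
    have "T \<in> Ind" using T k FS by auto
    hence "card T \<le> r F" using T(1) by (rule rk_ge)
    hence "k \<le> r F" using T by simp
    moreover have "r (insert x F) \<le> k" by (rule rk_le) (simp add: k)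
    moreover have "r F < r (insert x F)" using fl x unfolding flat_def by auto
    ultimately show False by simp
  qed
qed

lemma allPP: assumes h: "\<forall>W. W \<subseteq> S \<longrightarrow> PP M W" and cf: "cyclic_flat M F" shows "F = {} \<or> F = S"
proof (rule ccontr)
  assume nF: "\<not> (F = {} \<or> F = S)"
  have FS: "F \<subseteq> S" using cf unfolding cyclic_flat_def flat_def by auto
  obtain u where u: "u \<in> S - F" using nF FS by auto
  have "PP M {u}" using h u by auto
  hence "F \<subseteq> {u} \<or> {u} \<subseteq> F" using cf unfolding PP_def by blast
  thus False using u nF by auto
qed

lemma U1: assumes YZ: "Y \<subseteq> Z" and ZS: "Z \<subseteq> S" and h: "\<forall>W. Y \<subseteq> W \<and> W \<subseteq> Z \<longrightarrow> PP M W"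
  shows "uniform (minor M Y Z)"
proof -
  let ?N = "minor M Y Z"
  interpret N: mat ?N using YZ ZS by (intro minor_mat') auto
  have fN: "fst ?N = Z - Y" unfolding minor_def by simp
  have "\<forall>W. W \<subseteq> fst ?N \<longrightarrow> PP ?N W"
  proof (intro allI impI)
    fix W assume W: "W \<subseteq> fst ?N"
    have "PP M (Y \<union> W)" using h W fN YZ by auto
    hence "PP ?N ((Y \<union> W) - Y)" using W fN YZ ZS by (intro T1P) auto
    moreover have "(Y \<union> W) - Y = W" using W fN by auto
    ultimately show "PP ?N W" by simp
  qed
  thus ?thesis using N.allPP N.UA by blast
qed

lemma U2: assumes YZ: "Y \<subseteq> Z" and ZS: "Z \<subseteq> S" and u: "uniform (minor M Y Z)"
  and cf: "cyclic_flat M F" and YF: "Y \<subseteq> F" and FZ: "F \<subseteq> Z"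
  shows "F = Y \<or> F = Z"
proof -
  let ?N = "minor M Y Z"
  interpret N: mat ?N using YZ ZS by (intro minor_mat') auto
  have fN: "fst ?N = Z - Y" unfolding minor_def by simp
  have "cyclic_flat ?N (F - Y)" using YF FZ ZS cf by (rule CFT)
  hence "F - Y = {} \<or> F - Y = Z - Y" using N.UB u fN by auto
  thus ?thesis using YF FZ by auto
qed

end



lemma fp_ind: assumes m1: "matroid N1" and m2: "matroid N2" and dj: "fst N1 \<inter> fst N2 = {}"
  shows "A \<in> snd (free_prod N1 N2) \<longleftrightarrow> A \<subseteq> fst N1 \<union> fst N2 \<and> A \<inter> fst N1 \<in> snd N1
     \<and> card (A \<inter> fst N1) + card (A \<inter> fst N2) \<le> rk N1 (fst N1) + rk N2 (A \<inter> fst N2)"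
proof -
  interpret n1: mat N1 using m1 by (simp add: mat_def)
  interpret n2: mat N2 using m2 by (simp add: mat_def)
  have "A \<inter> fst N1 \<in> snd N1 \<Longrightarrow> (nu N2 (A \<inter> fst N2) \<le> lam N1 (A \<inter> fst N1)) \<longleftrightarrow>
     card (A \<inter> fst N1) + card (A \<inter> fst N2) \<le> rk N1 (fst N1) + rk N2 (A \<inter> fst N2)"
  proof -
    assume i: "A \<inter> fst N1 \<in> snd N1"
    have a1: "rk N1 (A \<inter> fst N1) = card (A \<inter> fst N1)" using n1.ind_rk[OF i] .
    have a2: "card (A \<inter> fst N1) \<le> rk N1 (fst N1)" using n1.rk_ge[OF i] by simp
    have "finite (A \<inter> fst N2)" by (rule n2.fin_sub) simp
    hence a3: "rk N2 (A \<inter> fst N2) \<le> card (A \<inter> fst N2)" by (rule n2.rk_le_card)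
    show ?thesis unfolding lam_def nu_def using a1 a2 a3 by linarith
  qed
  moreover have "A \<in> snd (free_prod N1 N2) \<longleftrightarrow> A \<subseteq> fst N1 \<union> fst N2 \<and> A \<inter> fst N1 \<in> snd N1 \<and> nu N2 (A \<inter> fst N2) \<le> lam N1 (A \<inter> fst N1)"
    unfolding free_prod_def by simp
  ultimately show ?thesis by blast
qed

lemma fp_mat: assumes m1: "matroid N1" and m2: "matroid N2" and dj: "fst N1 \<inter> fst N2 = {}"
  shows "matroid (free_prod N1 N2)"
proof -
  interpret n1: mat N1 using m1 by (simp add: mat_def)
  interpret n2: mat N2 using m2 by (simp add: mat_def)
  let ?X = "fst N1" and ?T = "fst N2" and ?r1 = "rk N1 (fst N1)"
  note fi = fp_ind[OF m1 m2 dj]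
  have mk: "\<And>C. C \<subseteq> ?X \<union> ?T \<Longrightarrow> C \<inter> ?X \<in> snd N1 \<Longrightarrow> card (C \<inter> ?X) + card (C \<inter> ?T) \<le> ?r1 + rk N2 (C \<inter> ?T) \<Longrightarrow> C \<in> snd (free_prod N1 N2)"
    using fi by blast
  have cardsplit: "\<And>A. A \<subseteq> ?X \<union> ?T \<Longrightarrow> card A = card (A \<inter> ?X) + card (A \<inter> ?T)"
  proof -
    fix A assume A: "A \<subseteq> ?X \<union> ?T"
    have "finite (?X \<union> ?T)" using n1.finS n2.finS by simp
    hence f: "finite A" using A by (rule finite_subset[rotated])
    have "A = (A \<inter> ?X) \<union> (A \<inter> ?T)" using A by auto
    hence "card A = card ((A \<inter> ?X) \<union> (A \<inter> ?T))" by simp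
    also have "\<dots> = card (A \<inter> ?X) + card (A \<inter> ?T)" using f dj by (intro card_Un_disjoint) auto
    finally show "card A = card (A \<inter> ?X) + card (A \<inter> ?T)" .
  qed
  show ?thesis unfolding matroid_def
  proof (intro conjI allI impI)
    show "finite (fst (free_prod N1 N2))" unfolding free_prod_def using n1.finS n2.finS by simp
    show "snd (free_prod N1 N2) \<subseteq> Pow (fst (free_prod N1 N2))" unfolding free_prod_def by auto
    show "{} \<in> snd (free_prod N1 N2)" unfolding fi using n1.ind_empty by (simp add: n2.rk_empty)
    fix A B
    {
      assume h: "A \<in> snd (free_prod N1 N2) \<and> B \<subseteq> A"
      hence "A \<in> snd (free_prod N1 N2)" by simp
      hence A: "A \<subseteq> ?X \<union> ?T" "A \<inter> ?X \<in> snd N1" "card (A \<inter> ?X) + card (A \<inter> ?T) \<le> ?r1 + rk N2 (A \<inter> ?T)"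
        using fi[of A] by blast+
      have BA: "B \<subseteq> A" using h by auto
      have BX: "B \<inter> ?X \<in> snd N1" using BA by (intro n1.ind_subset[OF A(2)]) auto
      have "finite (A \<inter> ?X)" by (rule n1.fin_sub) simp
      hence c1: "card (B \<inter> ?X) \<le> card (A \<inter> ?X)" using BA by (intro card_mono) auto
      have c2: "rk N2 (A \<inter> ?T) \<le> rk N2 (B \<inter> ?T) + card ((A \<inter> ?T) - (B \<inter> ?T))"
      proof -
        have "rk N2 ((B \<inter> ?T) \<union> ((A \<inter> ?T) - (B \<inter> ?T))) \<le> rk N2 (B \<inter> ?T) + card ((A \<inter> ?T) - (B \<inter> ?T))"
          by (intro n2.rk_union_le n2.fin_sub) auto
        moreover have "(B \<inter> ?T) \<union> ((A \<inter> ?T) - (B \<inter> ?T)) = A \<inter> ?T" using BA by auto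
        ultimately show ?thesis by simp
      qed
      have c3: "card (A \<inter> ?T) = card (B \<inter> ?T) + card ((A \<inter> ?T) - (B \<inter> ?T))"
      proof -
        have fa: "finite (A \<inter> ?T)" by (rule n2.fin_sub) simp
        moreover have sb: "B \<inter> ?T \<subseteq> A \<inter> ?T" using BA by auto
        ultimately have "finite (B \<inter> ?T)" by (rule finite_subset[rotated])
        have "card ((A \<inter> ?T) - (B \<inter> ?T)) = card (A \<inter> ?T) - card (B \<inter> ?T)"
          using \<open>finite (B \<inter> ?T)\<close> sb by (rule card_Diff_subset)
        moreover have "card (B \<inter> ?T) \<le> card (A \<inter> ?T)" using fa sb by (rule card_mono)
        ultimately show ?thesis by simp
      qed
      have "card (B \<inter> ?X) + card (B \<inter> ?T) \<le> ?r1 + rk N2 (B \<inter> ?T)" using A(3) c1 c2 c3 by linarith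
      moreover have "B \<subseteq> ?X \<union> ?T" using A(1) BA by auto
      ultimately show "B \<in> snd (free_prod N1 N2)" unfolding fi using BX by blast
    }
    {
      assume h: "A \<in> snd (free_prod N1 N2) \<and> B \<in> snd (free_prod N1 N2) \<and> card A < card B"
      hence A: "A \<subseteq> ?X \<union> ?T" "A \<inter> ?X \<in> snd N1" "card (A \<inter> ?X) + card (A \<inter> ?T) \<le> ?r1 + rk N2 (A \<inter> ?T)"
        and B: "B \<subseteq> ?X \<union> ?T" "B \<inter> ?X \<in> snd N1" "card (B \<inter> ?X) + card (B \<inter> ?T) \<le> ?r1 + rk N2 (B \<inter> ?T)"
        and lt: "card A < card B"
        using fi[of A] fi[of B] by blast+
      have cA: "card A = card (A \<inter> ?X) + card (A \<inter> ?T)" using cardsplit A(1) .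
      have cB: "card B = card (B \<inter> ?X) + card (B \<inter> ?T)" using cardsplit B(1) .
      have fAT: "finite (A \<inter> ?T)" by (rule n2.fin_sub) simp
      show "\<exists>y\<in>B - A. insert y A \<in> snd (free_prod N1 N2)"
      proof (cases "\<exists>y\<in>B \<inter> ?T. rk N2 (A \<inter> ?T) < rk N2 (insert y (A \<inter> ?T))")
        case True
        then obtain y where y: "y \<in> B \<inter> ?T" "rk N2 (A \<inter> ?T) < rk N2 (insert y (A \<inter> ?T))" by auto
        have yA: "y \<notin> A" using y by (auto simp: insert_absorb)
        have yX: "y \<notin> ?X" using y dj by auto
        have e1: "insert y A \<inter> ?X = A \<inter> ?X" using yX by auto
        have e2: "insert y A \<inter> ?T = insert y (A \<inter> ?T)" using y by auto
        have "card (insert y (A \<inter> ?T)) = Suc (card (A \<inter> ?T))" using fAT yA by simp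
        hence "card (insert y A \<inter> ?X) + card (insert y A \<inter> ?T) \<le> ?r1 + rk N2 (insert y A \<inter> ?T)"
          unfolding e1 e2 using A(3) y(2) by linarith
        moreover have "insert y A \<subseteq> ?X \<union> ?T" using A(1) y by auto
        ultimately have "insert y A \<in> snd (free_prod N1 N2)" using mk A(2) e1 by simp
        thus ?thesis using y yA by auto
      next
        case False
        have sp: "\<And>y. y \<in> B \<inter> ?T \<Longrightarrow> rk N2 (insert y (A \<inter> ?T)) = rk N2 (A \<inter> ?T)"
        proof -
          fix y assume "y \<in> B \<inter> ?T"
          hence "\<not> rk N2 (A \<inter> ?T) < rk N2 (insert y (A \<inter> ?T))" using False by blast
          moreover have "rk N2 (A \<inter> ?T) \<le> rk N2 (insert y (A \<inter> ?T))" by (rule n2.rk_mono) auto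
          ultimately show "rk N2 (insert y (A \<inter> ?T)) = rk N2 (A \<inter> ?T)" by simp
        qed
        have "rk N2 ((A \<inter> ?T) \<union> (B \<inter> ?T)) = rk N2 (A \<inter> ?T)" using sp by (rule n2.rk_span)
        moreover have "rk N2 (B \<inter> ?T) \<le> rk N2 ((A \<inter> ?T) \<union> (B \<inter> ?T))" by (intro n2.rk_mono) auto
        ultimately have rB: "rk N2 (B \<inter> ?T) \<le> rk N2 (A \<inter> ?T)" by simp
        show ?thesis
        proof (cases "card A < ?r1 + rk N2 (A \<inter> ?T)")
          case False
          thus ?thesis using rB B(3) cA cB lt by simp
        next
          case tight: True
          show ?thesis
          proof (cases "B \<inter> ?T \<subseteq> A")
            case False
            then obtain y where y: "y \<in> B \<inter> ?T" "y \<notin> A" by auto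
            have yX: "y \<notin> ?X" using y dj by auto
            have e1: "insert y A \<inter> ?X = A \<inter> ?X" using yX by auto
            have e2: "insert y A \<inter> ?T = insert y (A \<inter> ?T)" using y by auto
            have "card (insert y (A \<inter> ?T)) = Suc (card (A \<inter> ?T))" using fAT y by simp
            moreover have "rk N2 (insert y (A \<inter> ?T)) = rk N2 (A \<inter> ?T)" using sp y by simp
            ultimately have "card (insert y A \<inter> ?X) + card (insert y A \<inter> ?T) \<le> ?r1 + rk N2 (insert y A \<inter> ?T)"
              unfolding e1 e2 using tight cA by linarith
            moreover have "insert y A \<subseteq> ?X \<union> ?T" using A(1) y by auto
            ultimately have "insert y A \<in> snd (free_prod N1 N2)" using mk A(2) e1 by simp
            thus ?thesis using y by auto
          next
            case True
            hence "B \<inter> ?T \<subseteq> A \<inter> ?T" by auto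
            hence "card (B \<inter> ?T) \<le> card (A \<inter> ?T)" using fAT by (simp add: card_mono)
            hence "card (A \<inter> ?X) < card (B \<inter> ?X)" using cA cB lt by simp
            then obtain x where x: "x \<in> B \<inter> ?X - A \<inter> ?X" "insert x (A \<inter> ?X) \<in> snd N1"
              using n1.augment A(2) B(2) by blast
            have xT: "x \<notin> ?T" using x dj by auto
            have xA: "x \<notin> A" using x by auto
            have e1: "insert x A \<inter> ?X = insert x (A \<inter> ?X)" using x by auto
            have e2: "insert x A \<inter> ?T = A \<inter> ?T" using xT by auto
            have "finite (A \<inter> ?X)" by (rule n1.fin_sub) simp
            hence "card (insert x (A \<inter> ?X)) = Suc (card (A \<inter> ?X))" using xA by simp
            hence "card (insert x A \<inter> ?X) + card (insert x A \<inter> ?T) \<le> ?r1 + rk N2 (insert x A \<inter> ?T)"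
              unfolding e1 e2 using tight cA by linarith
            moreover have "insert x A \<subseteq> ?X \<union> ?T" using A(1) x by auto
            ultimately have "insert x A \<in> snd (free_prod N1 N2)" using mk x(2) e1 by simp
            thus ?thesis using x xA by auto
          qed
        qed
      qed
    }
  qed
qed

lemma DL: assumes mM: "matroid M" and m1: "matroid N1" and m2: "matroid N2" and dj: "fst N1 \<inter> fst N2 = {}"
  and eq: "M = free_prod N1 N2"
  shows "N1 = minor M {} (fst N1)" "N2 = minor M (fst N1) (fst M)" "splitI M (fst N1)"
proof -
  interpret m: mat M using mM by (simp add: mat_def)
  interpret n1: mat N1 using m1 by (simp add: mat_def)
  interpret n2: mat N2 using m2 by (simp add: mat_def)
  let ?X = "fst N1" and ?T = "fst N2" and ?r1 = "rk N1 (fst N1)"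
  have fM: "fst M = ?X \<union> ?T" using eq unfolding free_prod_def by simp
  have iM: "\<And>A. A \<in> snd M \<longleftrightarrow> A \<subseteq> ?X \<union> ?T \<and> A \<inter> ?X \<in> snd N1
     \<and> card (A \<inter> ?X) + card (A \<inter> ?T) \<le> ?r1 + rk N2 (A \<inter> ?T)"
    using fp_ind[OF m1 m2 dj] eq by simp
  have rkX: "\<And>B. B \<subseteq> ?T \<Longrightarrow> rk M (B \<union> ?X) = ?r1 + rk N2 B"
  proof -
    fix B assume BT: "B \<subseteq> ?T"
    obtain J where J: "J \<in> snd N1" "J \<subseteq> ?X" "card J = ?r1" using n1.rk_obtain by blast
    obtain K where K: "K \<in> snd N2" "K \<subseteq> B" "card K = rk N2 B" using n2.rk_obtain by blast
    have fJ: "finite J" "finite K" using J K n1.ind_fin n2.ind_fin by auto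
    have dJK: "J \<inter> K = {}" using J K BT dj by auto
    have e1: "(J \<union> K) \<inter> ?X = J" using J K BT dj by auto
    have e2: "(J \<union> K) \<inter> ?T = K" using J K BT dj by auto
    have "J \<union> K \<in> snd M" unfolding iM e1 e2 using J K BT n2.ind_rk[OF K(1)] by auto
    hence "card (J \<union> K) \<le> rk M (B \<union> ?X)" using J K by (intro m.rk_ge) auto
    moreover have "card (J \<union> K) = ?r1 + rk N2 B" using fJ dJK J K by (simp add: card_Un_disjoint)
    ultimately have "?r1 + rk N2 B \<le> rk M (B \<union> ?X)" by simp
    moreover have "rk M (B \<union> ?X) \<le> ?r1 + rk N2 B"
    proof (rule m.rk_le)
      fix A assume A: "A \<in> snd M" "A \<subseteq> B \<union> ?X"
      hence "card (A \<inter> ?X) + card (A \<inter> ?T) \<le> ?r1 + rk N2 (A \<inter> ?T)" using iM by blast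
      moreover have "rk N2 (A \<inter> ?T) \<le> rk N2 B" using A dj by (intro n2.rk_mono) auto
      moreover have "card A = card (A \<inter> ?X) + card (A \<inter> ?T)"
      proof -
        have f: "finite A" using A(1) m.ind_fin by auto
        have "A = (A \<inter> ?X) \<union> (A \<inter> ?T)" using A iM by auto
        hence "card A = card ((A \<inter> ?X) \<union> (A \<inter> ?T))" by simp
        also have "\<dots> = card (A \<inter> ?X) + card (A \<inter> ?T)" using f dj by (intro card_Un_disjoint) auto
        finally show ?thesis .
      qed
      ultimately show "card A \<le> ?r1 + rk N2 B" by simp
    qed
    ultimately show "rk M (B \<union> ?X) = ?r1 + rk N2 B" by simp
  qed
  have rX: "rk M ?X = ?r1" using rkX[of "{}"] by (simp add: n2.rk_empty)
  show N1: "N1 = minor M {} ?X"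
  proof -
    have "snd (minor M {} ?X) = snd N1"
    proof (rule set_eqI)
      fix A
      show "A \<in> snd (minor M {} ?X) \<longleftrightarrow> A \<in> snd N1"
      proof
        assume "A \<in> snd (minor M {} ?X)"
        hence A: "A \<subseteq> ?X" "rk M A = card A" unfolding minor_def by (auto simp: m.rk_empty)
        have "A \<in> snd M" using A fM by (intro m.rk_card_ind m.fin_sub) auto
        moreover have "A \<inter> ?X = A" using A by auto
        ultimately show "A \<in> snd N1" using iM by auto
      next
        assume A: "A \<in> snd N1"
        have AX: "A \<subseteq> ?X" using n1.ind_sub A by auto
        have e1: "A \<inter> ?X = A" and e2: "A \<inter> ?T = {}" using AX dj by auto
        have "card A \<le> ?r1" using A AX by (intro n1.rk_ge)
        hence "A \<in> snd M" unfolding iM e1 e2 using A AX by (auto simp: n2.rk_empty)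
        thus "A \<in> snd (minor M {} ?X)" unfolding minor_def using AX m.ind_rk by (auto simp: m.rk_empty)
      qed
    qed
    moreover have "fst (minor M {} ?X) = fst N1" unfolding minor_def by simp
    ultimately show ?thesis by (simp add: prod_eq_iff)
  qed
  show N2: "N2 = minor M ?X (fst M)"
  proof -
    have "snd (minor M ?X (fst M)) = snd N2"
    proof (rule set_eqI)
      fix B
      show "B \<in> snd (minor M ?X (fst M)) \<longleftrightarrow> B \<in> snd N2"
      proof
        assume "B \<in> snd (minor M ?X (fst M))"
        hence B: "B \<subseteq> ?T" "rk M (B \<union> ?X) = card B + rk M ?X" unfolding minor_def fM by auto
        hence "rk N2 B = card B" using rkX rX by simp
        thus "B \<in> snd N2" using B by (intro n2.rk_card_ind n2.fin_sub) auto
      next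
        assume B: "B \<in> snd N2"
        hence BT: "B \<subseteq> ?T" using n2.ind_sub by auto
        hence "rk M (B \<union> ?X) = card B + rk M ?X" using rkX rX n2.ind_rk[OF B] by simp
        moreover have "B \<subseteq> fst M - ?X" using BT dj fM by auto
        ultimately show "B \<in> snd (minor M ?X (fst M))" unfolding minor_def by auto
      qed
    qed
    moreover have "fst (minor M ?X (fst M)) = fst N2" unfolding minor_def using fM dj by auto
    ultimately show ?thesis by (simp add: prod_eq_iff)
  qed
  have "M = free_prod (minor M {} ?X) (minor M ?X (fst M))" using eq N1 N2 by simp
  thus "splitI M ?X" using m.fpsplit_iff fM by auto
qed




definition chainP :: "'a matroid \<Rightarrow> (nat \<Rightarrow> 'a set) \<Rightarrow> nat \<Rightarrow> bool" where
  "chainP M c k \<longleftrightarrow> c 0 = {} \<and> c k = fst M \<and> (\<forall>i<k. c i \<subset> c (Suc i)) \<and> (\<forall>i\<le>k. PP M (c i))"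

definition facs :: "'a matroid \<Rightarrow> (nat \<Rightarrow> 'a set) \<Rightarrow> nat \<Rightarrow> 'a matroid list" where
  "facs M c k = map (\<lambda>i. minor M (c i) (c (Suc i))) [0..<k]"

lemma ch_mono: assumes "\<forall>i<k. c i \<subset> c (Suc i)" "i \<le> j" "j \<le> k" shows "c i \<subseteq> c j"
  using assms(2,3)
proof (induction j)
  case 0 thus ?case by simp
next
  case (Suc j)
  show ?case
  proof (cases "i = Suc j")
    case True thus ?thesis by simp
  next
    case False
    hence "c i \<subseteq> c j" using Suc by simp
    moreover have "c j \<subset> c (Suc j)" using assms(1) Suc by simp
    ultimately show ?thesis by auto
  qed
qed

lemma ch_strict: assumes "\<forall>i<k. c i \<subset> c (Suc i)" "i < j" "j \<le> k" shows "c i \<subset> c j"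
proof -
  have "c i \<subset> c (Suc i)" using assms by simp
  moreover have "c (Suc i) \<subseteq> c j" using assms by (intro ch_mono[of k]) auto
  ultimately show ?thesis by auto
qed

lemma ch_le_iff: assumes "\<forall>i<k. c i \<subset> c (Suc i)" "i \<le> k" "j \<le> k" shows "c i \<subseteq> c j \<longleftrightarrow> i \<le> j"
proof
  assume "c i \<subseteq> c j"
  thus "i \<le> j" using ch_strict[OF assms(1), of j i] assms by (cases "j < i") auto
next
  assume "i \<le> j" thus "c i \<subseteq> c j" using ch_mono[OF assms(1)] assms by auto
qed

lemma chain_sub: "chainP M c k \<Longrightarrow> i \<le> k \<Longrightarrow> c i \<subseteq> fst M"
  unfolding chainP_def PP_def by auto

lemma fpl_cons: "xs \<noteq> [] \<Longrightarrow> free_prod_list (x # xs) = free_prod x (free_prod_list xs)"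
  by (cases xs) auto

lemma fpl_ground: "fst (free_prod_list Ns) = (\<Union>N\<in>set Ns. fst N)"
  by (induction Ns rule: free_prod_list.induct) (auto simp: free_prod_def)

fun dj :: "'a matroid list \<Rightarrow> bool" where
  "dj [] = True"
| "dj (N # Ns) = (fst N \<inter> (\<Union>N'\<in>set Ns. fst N') = {} \<and> dj Ns)"

lemma dj_nth: "(\<forall>i<length Ns. \<forall>j<length Ns. i \<noteq> j \<longrightarrow> fst (Ns ! i) \<inter> fst (Ns ! j) = {}) \<Longrightarrow> dj Ns"
proof (induction Ns)
  case Nil thus ?case by simp
next
  case (Cons N Ns)
  have "\<forall>i<length Ns. \<forall>j<length Ns. i \<noteq> j \<longrightarrow> fst (Ns ! i) \<inter> fst (Ns ! j) = {}"
  proof (intro allI impI)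
    fix i j assume "i < length Ns" "j < length Ns" "i \<noteq> j"
    thus "fst (Ns ! i) \<inter> fst (Ns ! j) = {}" using Cons.prems[rule_format, of "Suc i" "Suc j"] by simp
  qed
  hence "dj Ns" using Cons.IH by simp
  moreover have "fst N \<inter> (\<Union>N'\<in>set Ns. fst N') = {}"
  proof -
    have "\<And>N'. N' \<in> set Ns \<Longrightarrow> fst N \<inter> fst N' = {}"
    proof -
      fix N' assume "N' \<in> set Ns"
      then obtain j where j: "j < length Ns" "N' = Ns ! j" by (auto simp: in_set_conv_nth)
      thus "fst N \<inter> fst N' = {}" using Cons.prems[rule_format, of 0 "Suc j"] by simp
    qed
    thus ?thesis by auto
  qed
  ultimately show ?case by simp
qed

lemma fpl_mat: "(\<forall>N\<in>set Ns. matroid N) \<Longrightarrow> dj Ns \<Longrightarrow> matroid (free_prod_list Ns)"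
proof (induction Ns rule: free_prod_list.induct)
  case 1
  show ?case unfolding matroid_def by auto
next
  case (2 N) thus ?case by simp
next
  case (3 N v va)
  have a: "matroid (free_prod_list (v # va))" using 3 by simp
  have b: "fst N \<inter> fst (free_prod_list (v # va)) = {}" using 3(3) fpl_ground[of "v # va"] by simp
  have c: "matroid N" using 3(2) by simp
  show ?case using fp_mat[OF c a b] by simp
qed

lemma Union_nth: "(\<Union>i<length xs. f (xs ! i)) = (\<Union>x\<in>set xs. f x)"
  unfolding set_conv_nth by auto

context mat begin

lemma segG: assumes mono: "\<forall>i j. a \<le> i \<longrightarrow> i \<le> j \<longrightarrow> j \<le> b \<longrightarrow> c i \<subseteq> c j"
  and cb: "c b \<subseteq> S" and pp: "\<forall>i. a \<le> i \<longrightarrow> i \<le> b \<longrightarrow> PP M (c i)" and ab: "a < b"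
  shows "free_prod_list (map (\<lambda>i. minor M (c i) (c (Suc i))) [a..<b]) = minor M (c a) (c b)"
proof -
  have "\<And>a. a + Suc d = b \<Longrightarrow> (\<forall>i j. a \<le> i \<longrightarrow> i \<le> j \<longrightarrow> j \<le> b \<longrightarrow> c i \<subseteq> c j) \<Longrightarrow> (\<forall>i. a \<le> i \<longrightarrow> i \<le> b \<longrightarrow> PP M (c i))
    \<Longrightarrow> free_prod_list (map (\<lambda>i. minor M (c i) (c (Suc i))) [a..<b]) = minor M (c a) (c b)" for d
  proof (induction d)
    case 0
    hence "[a..<b] = [a]" by auto
    thus ?case using 0 by simp
  next
    case (Suc d)
    have u: "[a..<b] = a # [Suc a..<b]" using Suc.prems by (simp add: upt_conv_Cons)
    have ne: "[Suc a..<b] \<noteq> []" using Suc.prems by simp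
    have ih: "free_prod_list (map (\<lambda>i. minor M (c i) (c (Suc i))) [Suc a..<b]) = minor M (c (Suc a)) (c b)"
      using Suc.prems by (intro Suc.IH) auto
    have s1: "c a \<subseteq> c (Suc a)" and s2: "c (Suc a) \<subseteq> c b" using Suc.prems by auto
    have "c (Suc a) \<subseteq> S" using s2 cb by auto
    moreover have "PP M (c (Suc a))" using Suc.prems by auto
    ultimately have "splitI M (c (Suc a))" using split_iff_PP by blast
    hence "minor M (c a) (c b) = free_prod (minor M (c a) (c (Suc a))) (minor M (c (Suc a)) (c b))"
      using s1 s2 cb by (intro three_term) auto
    thus ?case unfolding u using ne ih by (simp add: fpl_cons)
  qed
  moreover obtain d where "a + Suc d = b" using ab by (metis less_iff_Suc_add add_Suc_right add_Suc)
  ultimately show ?thesis using mono pp by blast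
qed

lemma chain_seg: assumes ch: "chainP M c k" and ij: "i < j" and jk: "j \<le> k"
  shows "free_prod_list (map (\<lambda>i. minor M (c i) (c (Suc i))) [i..<j]) = minor M (c i) (c j)"
proof (rule segG)
  have st: "\<forall>i<k. c i \<subset> c (Suc i)" using ch unfolding chainP_def by auto
  show "\<forall>i' j'. i \<le> i' \<longrightarrow> i' \<le> j' \<longrightarrow> j' \<le> j \<longrightarrow> c i' \<subseteq> c j'" using ch_mono[OF st] jk by auto
  show "c j \<subseteq> S" using chain_sub[OF ch jk] .
  show "\<forall>i'. i \<le> i' \<longrightarrow> i' \<le> j \<longrightarrow> PP M (c i')" using ch jk unfolding chainP_def by auto
  show "i < j" by fact
qed

lemma F2: assumes ch: "chainP M c k" shows "factorization (facs M c k) M"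
proof -
  have c0: "c 0 = {}" and ck: "c k = S" and st: "\<forall>i<k. c i \<subset> c (Suc i)" and pp: "\<forall>i\<le>k. PP M (c i)"
    using ch unfolding chainP_def by auto
  have len: "length (facs M c k) = k" unfolding facs_def by simp
  have nth: "\<And>i. i < k \<Longrightarrow> facs M c k ! i = minor M (c i) (c (Suc i))" unfolding facs_def by simp
  have sub: "\<And>i. i \<le> k \<Longrightarrow> c i \<subseteq> S" using chain_sub[OF ch] by auto
  have "\<forall>N\<in>set (facs M c k). matroid N"
  proof
    fix N assume "N \<in> set (facs M c k)"
    then obtain i where i: "i < k" "N = minor M (c i) (c (Suc i))" unfolding facs_def by auto
    thus "matroid N" using st sub[of "Suc i"] by (auto intro: minor_mat)
  qed
  moreover have "partitions_ground (facs M c k) S" unfolding partitions_ground_def len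
  proof (intro conjI allI impI)
    fix i assume i: "i < k"
    show "fst (facs M c k ! i) \<noteq> {}" using nth[OF i] st i unfolding minor_def by auto
  next
    fix i j assume i: "i < k" and j: "j < k" and ij: "i \<noteq> j"
    show "fst (facs M c k ! i) \<inter> fst (facs M c k ! j) = {}"
    proof (cases "i < j")
      case True
      hence "c (Suc i) \<subseteq> c j" using ch_mono[OF st] j by auto
      thus ?thesis using nth i j unfolding minor_def by auto
    next
      case False
      hence "c (Suc j) \<subseteq> c i" using ch_mono[OF st] i ij by auto
      thus ?thesis using nth i j unfolding minor_def by auto
    qed
  next
    have "\<And>n. n \<le> k \<Longrightarrow> (\<Union>i<n. fst (facs M c k ! i)) = c n"
    proof -
      fix n show "n \<le> k \<Longrightarrow> (\<Union>i<n. fst (facs M c k ! i)) = c n"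
      proof (induction n)
        case 0 thus ?case using c0 by simp
      next
        case (Suc n)
        have "(\<Union>i<Suc n. fst (facs M c k ! i)) = (\<Union>i<n. fst (facs M c k ! i)) \<union> fst (facs M c k ! n)"
          by (simp add: lessThan_Suc Un_commute)
        also have "\<dots> = c n \<union> (c (Suc n) - c n)" using Suc nth[of n] unfolding minor_def by simp
        also have "\<dots> = c (Suc n)" using st[rule_format, of n] Suc.prems by auto
        finally show ?case .
      qed
    qed
    thus "(\<Union>i<k. fst (facs M c k ! i)) = S" using ck by simp
  qed
  moreover have "M = free_prod_list (facs M c k)"
  proof (cases "k = 0")
    case True
    hence "S = {}" using c0 ck by simp
    hence "Ind = {{}}" using ind_empty ind_sub by auto
    hence "M = ({}, {{}})" using \<open>S = {}\<close> by (simp add: prod_eq_iff)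
    thus ?thesis using True unfolding facs_def by simp
  next
    case False
    hence "free_prod_list (facs M c k) = minor M (c 0) (c k)" unfolding facs_def
      using ch by (intro chain_seg) auto
    thus ?thesis using c0 ck minor_id by simp
  qed
  ultimately show ?thesis unfolding factorization_def by auto
qed

end

lemma F1: "matroid M \<Longrightarrow> factorization Ms M \<Longrightarrow> \<exists>c. chainP M c (length Ms) \<and> Ms = facs M c (length Ms)"
proof (induction Ms arbitrary: M)
  case Nil
  interpret m: mat M using Nil by (simp add: mat_def)
  have S: "fst M = {}" using Nil unfolding factorization_def partitions_ground_def by simp
  have "chainP M (\<lambda>_. {}) 0" unfolding chainP_def PP_def using S by auto
  moreover have "[] = facs M (\<lambda>_. {}) 0" unfolding facs_def by simp
  ultimately show ?case by auto
next
  case (Cons N Ns)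
  interpret m: mat M using Cons by (simp add: mat_def)
  have mN: "matroid N" and mNs: "\<forall>N'\<in>set Ns. matroid N'" and eq: "M = free_prod_list (N # Ns)"
    and pg: "partitions_ground (N # Ns) (fst M)"
    using Cons.prems unfolding factorization_def by auto
  have ne0: "fst N \<noteq> {}" using pg unfolding partitions_ground_def by force
  have PPS: "PP M (fst M)" unfolding PP_def cyclic_flat_def flat_def by auto
  have PP0: "PP M {}" unfolding PP_def by auto
  show ?case
  proof (cases "Ns = []")
    case True
    hence MN: "M = N" using eq by simp
    let ?c = "\<lambda>i::nat. if i = 0 then {} else fst M"
    have ch: "chainP M ?c (Suc 0)" unfolding chainP_def using ne0 MN PPS PP0 by auto
    have e: "[N] = facs M ?c (Suc 0)" unfolding facs_def using MN m.minor_id by simp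
    have l: "length [N] = Suc 0" by simp
    show ?thesis unfolding True l using ch e by blast
  next
    case False
    let ?R = "free_prod_list Ns" and ?X = "fst N"
    have eq2: "M = free_prod N ?R" using eq False by (simp add: fpl_cons)
    have pgn: "\<forall>i<length (N # Ns). \<forall>j<length (N # Ns). i \<noteq> j \<longrightarrow> fst ((N # Ns) ! i) \<inter> fst ((N # Ns) ! j) = {}"
      using pg unfolding partitions_ground_def by blast
    have djs: "dj (N # Ns)" using dj_nth[OF pgn] .
    have "dj Ns" using djs by simp
    hence mR: "matroid ?R" using fpl_mat mNs by blast
    have djNR: "?X \<inter> fst ?R = {}" using djs fpl_ground[of Ns] by simp
    have N1: "N = minor M {} ?X" and R1: "?R = minor M ?X (fst M)" and spX: "splitI M ?X"
      using DL[OF Cons.prems(1) mN mR djNR eq2] by auto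
    have XS: "?X \<subseteq> fst M" using eq2 unfolding free_prod_def by auto
    have fR: "fst ?R = fst M - ?X" using R1 unfolding minor_def by simp
    have "partitions_ground Ns (fst ?R)" unfolding partitions_ground_def
    proof (intro conjI allI impI)
      fix i assume "i < length Ns"
      thus "fst (Ns ! i) \<noteq> {}" using pg unfolding partitions_ground_def
        by (metis Suc_less_eq length_Cons nth_Cons_Suc)
    next
      fix i j assume "i < length Ns" "j < length Ns" "i \<noteq> j"
      thus "fst (Ns ! i) \<inter> fst (Ns ! j) = {}" using pgn[rule_format, of "Suc i" "Suc j"] by simp
    next
      show "(\<Union>i<length Ns. fst (Ns ! i)) = fst ?R" using fpl_ground[of Ns] Union_nth[of fst Ns] by simp
    qed
    hence "factorization Ns ?R" unfolding factorization_def using mNs by simp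
    then obtain c' where c': "chainP ?R c' (length Ns)" "Ns = facs ?R c' (length Ns)" using Cons.IH mR by blast
    let ?n = "length Ns"
    have c'0: "c' 0 = {}" and c'n: "c' ?n = fst ?R" and st': "\<forall>i<?n. c' i \<subset> c' (Suc i)"
      and pp': "\<forall>i\<le>?n. PP ?R (c' i)" using c'(1) unfolding chainP_def by auto
    have sub': "\<And>i. i \<le> ?n \<Longrightarrow> c' i \<subseteq> fst M - ?X" using chain_sub[OF c'(1)] fR by auto
    define c where "c i = (if i = 0 then {} else ?X \<union> c' (i - 1))" for i
    have cS: "\<And>i. c (Suc i) = ?X \<union> c' i" unfolding c_def by simp
    have PPX: "PP M ?X" using m.split_iff_PP XS spX by blast
    have "chainP M c (Suc ?n)" unfolding chainP_def
    proof (intro conjI allI impI)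
      show "c 0 = {}" unfolding c_def by simp
      show "c (Suc ?n) = fst M" unfolding cS c'n fR using XS by auto
    next
      fix i assume i: "i < Suc ?n"
      show "c i \<subset> c (Suc i)"
      proof (cases i)
        case 0 thus ?thesis unfolding c_def using c'0 ne0 by auto
      next
        case (Suc j)
        have "c' j \<subset> c' (Suc j)" using st' i Suc by simp
        moreover have "c' (Suc j) \<subseteq> fst M - ?X" using sub' i Suc by simp
        ultimately show ?thesis unfolding Suc cS by auto
      qed
    next
      fix i assume i: "i \<le> Suc ?n"
      show "PP M (c i)"
      proof (cases i)
        case 0 thus ?thesis unfolding c_def using PP0 by simp
      next
        case (Suc j)
        have "PP (minor M ?X (fst M)) (c' j)" using pp' i Suc R1 by simp
        hence "PP M (?X \<union> c' j)" using XS PPX PPS sub'[of j] i Suc by (intro m.T2) auto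
        thus ?thesis unfolding Suc cS .
      qed
    qed
    moreover have "N # Ns = facs M c (Suc ?n)"
    proof -
      have "[0..<Suc ?n] = 0 # map Suc [0..<?n]" by (metis map_Suc_upt upt_conv_Cons zero_less_Suc)
      hence "facs M c (Suc ?n) = minor M (c 0) (c (Suc 0)) # map (\<lambda>i. minor M (c (Suc i)) (c (Suc (Suc i)))) [0..<?n]"
        unfolding facs_def by simp
      moreover have "minor M (c 0) (c (Suc 0)) = N" using N1 cS[of 0] c'0 unfolding c_def by simp
      moreover have "map (\<lambda>i. minor M (c (Suc i)) (c (Suc (Suc i)))) [0..<?n] = Ns"
      proof -
        have "map (\<lambda>i. minor M (c (Suc i)) (c (Suc (Suc i)))) [0..<?n] = map (\<lambda>i. minor ?R (c' i) (c' (Suc i))) [0..<?n]"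
        proof (rule map_cong[OF refl])
          fix i assume "i \<in> set [0..<?n]"
          hence i: "i < ?n" by simp
          have "minor ?R (c' i) (c' (Suc i)) = minor M (?X \<union> c' i) (?X \<union> c' (Suc i))"
            unfolding R1 using XS st' i sub'[of "Suc i"] by (intro m.minor_minor) auto
          thus "minor M (c (Suc i)) (c (Suc (Suc i))) = minor ?R (c' i) (c' (Suc i))" unfolding cS by simp
        qed
        thus ?thesis using c'(2) unfolding facs_def by simp
      qed
      ultimately show ?thesis by simp
    qed
    moreover have "length (N # Ns) = Suc ?n" by simp
    ultimately show ?thesis by metis
  qed
qed




lemma fst_minor: "fst (minor N A B) = B - A" by (simp add: minor_def)

lemma PP_empty: "PP M {}" unfolding PP_def by auto
lemma PP_ground: "PP M (fst M)" unfolding PP_def cyclic_flat_def flat_def by auto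

lemma cf_sub: "cyclic_flat M F \<Longrightarrow> F \<subseteq> fst M" unfolding cyclic_flat_def flat_def by auto

lemma Dlat_min: "complete_sublattice (fst M) L \<Longrightarrow> {F. cyclic_flat M F} \<subseteq> L \<Longrightarrow> Dlat M \<subseteq> L"
  unfolding Dlat_def by auto

lemma Dlat_Pow: "Dlat M \<subseteq> Pow (fst M)"
proof (rule Dlat_min)
  show "complete_sublattice (fst M) (Pow (fst M))" unfolding complete_sublattice_def by auto
  show "{F. cyclic_flat M F} \<subseteq> Pow (fst M)" using cf_sub[of M] by auto
qed

lemma Dlat_sub: "D \<in> Dlat M \<Longrightarrow> D \<subseteq> fst M" using Dlat_Pow[of M] by auto

lemma cf_Dlat: "cyclic_flat M F \<Longrightarrow> F \<in> Dlat M" unfolding Dlat_def by auto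

lemma Dlat_Un: assumes F: "F \<subseteq> Dlat M" shows "\<Union>F \<in> Dlat M"
  unfolding Dlat_def
proof (rule InterI)
  fix L assume L: "L \<in> {L. complete_sublattice (fst M) L \<and> {F. cyclic_flat M F} \<subseteq> L}"
  hence "F \<subseteq> L" using F unfolding Dlat_def by blast
  thus "\<Union>F \<in> L" using L unfolding complete_sublattice_def by blast
qed

lemma Dlat_Int: assumes F: "F \<subseteq> Dlat M" shows "fst M \<inter> \<Inter>F \<in> Dlat M"
  unfolding Dlat_def
proof (rule InterI)
  fix L assume L: "L \<in> {L. complete_sublattice (fst M) L \<and> {F. cyclic_flat M F} \<subseteq> L}"
  hence "F \<subseteq> L" using F unfolding Dlat_def by blast
  thus "fst M \<inter> \<Inter>F \<in> L" using L unfolding complete_sublattice_def by blast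
qed

lemma Dlat_empty: "{} \<in> Dlat M" using Dlat_Un[of "{}" M] by simp
lemma Dlat_S: "fst M \<in> Dlat M" using Dlat_Int[of "{}" M] by simp

lemma D2: assumes YZ: "Y \<subseteq> Z" and h: "\<forall>F. cyclic_flat M F \<longrightarrow> F \<subseteq> Y \<or> Z \<subseteq> F"
  and ZS: "Z \<subseteq> fst M" and D: "D \<in> Dlat M"
  shows "D \<subseteq> Y \<or> Z \<subseteq> D"
proof -
  let ?L = "{D. D \<subseteq> fst M \<and> (D \<subseteq> Y \<or> Z \<subseteq> D)}"
  have "complete_sublattice (fst M) ?L" unfolding complete_sublattice_def
  proof (intro conjI allI impI)
    show "?L \<subseteq> Pow (fst M)" by auto
    fix F assume F: "F \<subseteq> ?L"
    show "\<Union>F \<in> ?L"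
    proof (cases "\<exists>D\<in>F. Z \<subseteq> D")
      case True thus ?thesis using F by auto
    next
      case False hence "\<forall>D\<in>F. D \<subseteq> Y" using F by auto
      thus ?thesis using F by auto
    qed
    show "fst M \<inter> \<Inter>F \<in> ?L"
    proof (cases "\<exists>D\<in>F. D \<subseteq> Y")
      case True thus ?thesis by auto
    next
      case False hence "\<forall>D\<in>F. Z \<subseteq> D" using F by auto
      thus ?thesis using ZS by auto
    qed
  qed
  moreover have "{F. cyclic_flat M F} \<subseteq> ?L" using h cf_sub[of M] by auto
  ultimately have "Dlat M \<subseteq> ?L" by (rule Dlat_min)
  thus ?thesis using D by auto
qed

lemma D1: assumes XS: "X \<subseteq> fst M" shows "PP M X \<longleftrightarrow> (\<forall>D\<in>Dlat M. D \<subseteq> X \<or> X \<subseteq> D)"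
proof
  assume "PP M X"
  hence "\<forall>F. cyclic_flat M F \<longrightarrow> F \<subseteq> X \<or> X \<subseteq> F" unfolding PP_def by auto
  thus "\<forall>D\<in>Dlat M. D \<subseteq> X \<or> X \<subseteq> D" using D2[of X X M] XS by blast
next
  assume "\<forall>D\<in>Dlat M. D \<subseteq> X \<or> X \<subseteq> D"
  thus "PP M X" unfolding PP_def using XS cf_Dlat by blast
qed

lemma pinch_PP: assumes p: "pinchpoint M T" shows "PP M T"
proof -
  have T: "T \<in> Dlat M" "\<forall>U\<in>Dlat M. T \<subseteq> U \<or> U \<subseteq> T" using p unfolding pinchpoint_def by auto
  have TS: "T \<subseteq> fst M" using T(1) by (rule Dlat_sub)
  have "\<forall>D\<in>Dlat M. D \<subseteq> T \<or> T \<subseteq> D" using T(2) by blast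
  thus ?thesis using D1[OF TS] by simp
qed

lemma PP_pinch: assumes pp: "PP M T" and T: "T \<in> Dlat M" shows "pinchpoint M T"
proof -
  have TS: "T \<subseteq> fst M" using T by (rule Dlat_sub)
  have "\<forall>D\<in>Dlat M. D \<subseteq> T \<or> T \<subseteq> D" using D1[OF TS] pp by simp
  thus ?thesis unfolding pinchpoint_def using T by blast
qed

lemma D3: assumes pp: "PP M X"
  shows "\<exists>D1 D2. pinchpoint M D1 \<and> pinchpoint M D2 \<and> D1 \<subseteq> X \<and> X \<subseteq> D2
    \<and> (\<forall>D\<in>Dlat M. D \<subseteq> D1 \<or> D2 \<subseteq> D) \<and> (\<forall>D\<in>Dlat M. D \<subseteq> X \<longrightarrow> D \<subseteq> D1) \<and> (\<forall>D\<in>Dlat M. X \<subseteq> D \<longrightarrow> D2 \<subseteq> D)"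
proof -
  have XS: "X \<subseteq> fst M" using pp unfolding PP_def by auto
  have cmp: "\<forall>D\<in>Dlat M. D \<subseteq> X \<or> X \<subseteq> D" using D1[OF XS] pp by simp
  define D1 where "D1 = \<Union>{D\<in>Dlat M. D \<subseteq> X}"
  define D2 where "D2 = fst M \<inter> \<Inter>{D\<in>Dlat M. X \<subseteq> D}"
  have D1in: "D1 \<in> Dlat M" unfolding D1_def by (rule Dlat_Un) auto
  have D2in: "D2 \<in> Dlat M" unfolding D2_def by (rule Dlat_Int) auto
  have D1X: "D1 \<subseteq> X" unfolding D1_def by auto
  have XD2: "X \<subseteq> D2" unfolding D2_def using XS by auto
  have lo: "\<forall>D\<in>Dlat M. D \<subseteq> X \<longrightarrow> D \<subseteq> D1" unfolding D1_def by auto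
  have hi: "\<forall>D\<in>Dlat M. X \<subseteq> D \<longrightarrow> D2 \<subseteq> D" unfolding D2_def by auto
  have sp: "\<forall>D\<in>Dlat M. D \<subseteq> D1 \<or> D2 \<subseteq> D"
  proof
    fix U assume U: "U \<in> Dlat M"
    show "U \<subseteq> D1 \<or> D2 \<subseteq> U"
    proof (cases "U \<subseteq> X")
      case True thus ?thesis using lo U by blast
    next
      case False hence "X \<subseteq> U" using cmp U by blast
      thus ?thesis using hi U by blast
    qed
  qed
  have "pinchpoint M D1" unfolding pinchpoint_def
  proof (intro conjI ballI D1in)
    fix U assume U: "U \<in> Dlat M"
    show "D1 \<subseteq> U \<or> U \<subseteq> D1"
    proof (cases "U \<subseteq> X")
      case True thus ?thesis using lo U by blast
    next
      case False hence "X \<subseteq> U" using cmp U by blast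
      thus ?thesis using D1X by blast
    qed
  qed
  moreover have "pinchpoint M D2" unfolding pinchpoint_def
  proof (intro conjI ballI D2in)
    fix U assume U: "U \<in> Dlat M"
    show "D2 \<subseteq> U \<or> U \<subseteq> D2"
    proof (cases "U \<subseteq> X")
      case True thus ?thesis using XD2 by blast
    next
      case False hence "X \<subseteq> U" using cmp U by blast
      thus ?thesis using hi U by blast
    qed
  qed
  ultimately show ?thesis using D1X XD2 sp lo hi by (intro exI[of _ D1] exI[of _ D2]) simp
qed

lemma sorted_psub_unique: "sorted_wrt (\<subset>) xs \<Longrightarrow> sorted_wrt (\<subset>) ys \<Longrightarrow> set xs = set ys \<Longrightarrow> xs = ys"
proof (induction xs arbitrary: ys)
  case Nil thus ?case by simp
next
  case (Cons x xs)
  then obtain y ys' where ys: "ys = y # ys'" by (cases ys) auto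
  have xy: "x = y"
  proof (rule ccontr)
    assume ne: "x \<noteq> y"
    have "x \<in> set ys'" using Cons.prems(3) ys ne by (metis insertE list.set_intros(1) list.simps(15))
    hence "y \<subset> x" using Cons.prems(2) ys by simp
    moreover have "y \<in> set xs" using Cons.prems(3) ys ne by (metis insertE list.set_intros(1) list.simps(15))
    hence "x \<subset> y" using Cons.prems(1) by simp
    ultimately show False by auto
  qed
  have "x \<notin> set xs" using Cons.prems(1) by auto
  moreover have "y \<notin> set ys'" using Cons.prems(2) ys by auto
  ultimately have "set xs = set ys'" using Cons.prems(3) ys xy by auto
  hence "xs = ys'" using Cons.IH Cons.prems ys by simp
  thus ?case using ys xy by simp
qed

lemma td: assumes "i \<le> j" "j < k"
  shows "take (j - i + 1) (drop i (map f [0..<k])) = map f [i..<Suc j]"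
proof -
  have "drop i (map f [0..<k]) = map f [i..<k]" by (simp add: drop_map)
  moreover have "take (j - i + 1) [i..<k] = [i..<Suc j]" using assms by (simp add: take_upt)
  ultimately show ?thesis by (simp add: take_map)
qed

context mat begin

lemma irr_iff: assumes YZ: "Y \<subset> Z" and ZS: "Z \<subseteq> S" and pY: "PP M Y" and pZ: "PP M Z"
  shows "irreducible (minor M Y Z) \<longleftrightarrow> \<not> (\<exists>W. Y \<subset> W \<and> W \<subset> Z \<and> PP M W)"
proof -
  let ?N = "minor M Y Z"
  interpret N: mat ?N using YZ ZS by (intro minor_mat') auto
  have mN: "matroid ?N" using N.mat .
  have fN: "fst ?N = Z - Y" unfolding minor_def by simp
  have neN: "fst ?N \<noteq> {}" using fN YZ by auto
  show ?thesis
  proof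
    assume irr: "irreducible ?N"
    show "\<not> (\<exists>W. Y \<subset> W \<and> W \<subset> Z \<and> PP M W)"
    proof
      assume "\<exists>W. Y \<subset> W \<and> W \<subset> Z \<and> PP M W"
      then obtain W where W: "Y \<subset> W" "W \<subset> Z" "PP M W" by blast
      have ppW: "PP ?N (W - Y)" using W ZS by (intro T1P) auto
      define c' where "c' i = (if i = 0 then {} else if i = 1 then W - Y else Z - Y)" for i :: nat
      have "chainP ?N c' 2" unfolding chainP_def
      proof (intro conjI allI impI)
        show "c' 0 = {}" unfolding c'_def by simp
        show "c' 2 = fst ?N" unfolding c'_def fN by simp
      next
        fix i :: nat assume "i < 2"
        hence "i = 0 \<or> i = 1" by auto
        thus "c' i \<subset> c' (Suc i)" unfolding c'_def using W by auto
      next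
        fix i :: nat assume "i \<le> 2"
        hence "i = 0 \<or> i = 1 \<or> i = 2" by auto
        thus "PP ?N (c' i)" unfolding c'_def using ppW PP_empty[of ?N] PP_ground[of ?N] fN by auto
      qed
      hence "factorization (facs ?N c' 2) ?N" by (rule N.F2)
      hence "?N \<in> set (facs ?N c' 2)" using irr unfolding irreducible_def by blast
      moreover have "facs ?N c' 2 = [minor ?N {} (W - Y), minor ?N (W - Y) (Z - Y)]"
        unfolding facs_def c'_def by (simp add: upt_rec)
      ultimately have "?N = minor ?N {} (W - Y) \<or> ?N = minor ?N (W - Y) (Z - Y)" by simp
      hence "fst ?N = fst (minor ?N {} (W - Y)) \<or> fst ?N = fst (minor ?N (W - Y) (Z - Y))" by metis
      hence "fst ?N = W - Y \<or> fst ?N = (Z - Y) - (W - Y)" by (simp add: fst_minor)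
      thus False using fN W by auto
    qed
  next
    assume noW: "\<not> (\<exists>W. Y \<subset> W \<and> W \<subset> Z \<and> PP M W)"
    show "irreducible ?N" unfolding irreducible_def
    proof (intro conjI allI impI neN)
      fix Ms assume fac: "factorization Ms ?N"
      obtain d where d: "chainP ?N d (length Ms)" "Ms = facs ?N d (length Ms)" using F1[OF mN fac] by blast
      have d0: "d 0 = {}" and dm: "d (length Ms) = fst ?N" and st: "\<forall>i<length Ms. d i \<subset> d (Suc i)"
        and pp: "\<forall>i\<le>length Ms. PP ?N (d i)" using d(1) unfolding chainP_def by auto
      show "?N \<in> set Ms"
      proof (cases "length Ms")
        case 0 thus ?thesis using d0 dm neN by simp
      next
        case (Suc n)
        show ?thesis
        proof (cases n)
          case 0
          hence "Ms = [minor ?N (d 0) (d 1)]" using d(2) Suc by (simp add: facs_def)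
          thus ?thesis using d0 dm Suc 0 N.minor_id by simp
        next
          case (Suc n')
          let ?W = "d 1"
          have l: "length Ms = Suc (Suc n')" using \<open>length Ms = Suc n\<close> Suc by simp
          have a: "{} \<subset> ?W" using st d0 l by auto
          have "d 1 \<subset> d (length Ms)" using st l by (intro ch_strict[of "length Ms"]) auto
          hence b: "?W \<subset> Z - Y" using dm fN by simp
          have "PP ?N ?W" using pp l by auto
          hence "PP M (Y \<union> ?W)" using YZ ZS pY pZ b by (intro T2) auto
          moreover have "Y \<subset> Y \<union> ?W" using a b by auto
          moreover have "Y \<union> ?W \<subset> Z" using b YZ by auto
          ultimately show ?thesis using noW by blast
        qed
      qed
    qed
  qed
qed

lemma uni_blocks: assumes YZ: "Y \<subseteq> Z" and ZS: "Z \<subseteq> S" and pY: "PP M Y" and pZ: "PP M Z"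
  and u: "uniform (minor M Y Z)" and D: "D \<in> Dlat M"
  shows "D \<subseteq> Y \<or> Z \<subseteq> D"
proof (rule D2[OF YZ _ ZS D], intro allI impI)
  fix F assume cf: "cyclic_flat M F"
  show "F \<subseteq> Y \<or> Z \<subseteq> F"
  proof (cases "F \<subseteq> Y")
    case True thus ?thesis by simp
  next
    case False
    hence YF: "Y \<subseteq> F" using pY cf unfolding PP_def by blast
    show ?thesis
    proof (cases "Z \<subseteq> F")
      case True thus ?thesis by simp
    next
      case False
      hence FZ: "F \<subseteq> Z" using pZ cf unfolding PP_def by blast
      have "F = Y \<or> F = Z" using YZ ZS u cf YF FZ by (rule U2)
      thus ?thesis by auto
    qed
  qed
qed

lemma blocks_uni: assumes YZ: "Y \<subseteq> Z" and ZS: "Z \<subseteq> S" and h: "\<forall>D\<in>Dlat M. D \<subseteq> Y \<or> Z \<subseteq> D"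
  shows "uniform (minor M Y Z)"
proof (rule U1[OF YZ ZS], intro allI impI)
  fix W assume W: "Y \<subseteq> W \<and> W \<subseteq> Z"
  show "PP M W" unfolding PP_def
  proof (intro conjI allI impI)
    show "W \<subseteq> S" using W ZS by auto
    fix F assume "cyclic_flat M F"
    hence "F \<subseteq> Y \<or> Z \<subseteq> F" using h cf_Dlat by blast
    thus "F \<subseteq> W \<or> W \<subseteq> F" using W by auto
  qed
qed

end



theorem theorem6p16:
  fixes M :: "'a matroid" and Ts :: "'a set list"
  assumes "matroid M"
    and "primary_flag M Ts"
  shows "\<forall>Ms. (factorization Ms M
              \<and> (\<forall>N \<in> set Ms. irreducible N \<or> uniform N)
              \<and> (\<forall>i j. i < j \<and> j < length Ms \<longrightarrow>
                    \<not> uniform (free_prod_list (take (j - i + 1) (drop i Ms)))))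
           \<longleftrightarrow> Ms = primary_factors M Ts"
proof -
  interpret m: mat M using assms(1) by (simp add: mat_def)
  have sorted: "sorted_wrt (\<subset>) Ts" and setT: "set Ts = {T. pinchpoint M T}"
    using assms(2) unfolding primary_flag_def by auto
  have pin0: "pinchpoint M {}" using PP_pinch[OF PP_empty Dlat_empty] .
  have pinS: "pinchpoint M (fst M)" using PP_pinch[OF PP_ground Dlat_S] .
  have neT: "Ts \<noteq> []" using setT pin0 by auto
  define k where "k = length Ts - 1"
  have lenT: "length Ts = Suc k" unfolding k_def using neT by (cases Ts) auto
  define c where "c i = Ts ! i" for i
  have lt: "\<And>i j. i < j \<Longrightarrow> j \<le> k \<Longrightarrow> c i \<subset> c j"
    unfolding c_def using sorted lenT by (simp add: sorted_wrt_iff_nth_less)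
  have st: "\<forall>i<k. c i \<subset> c (Suc i)" using lt by auto
  have pinc: "\<And>i. i \<le> k \<Longrightarrow> pinchpoint M (c i)" unfolding c_def using setT lenT
    by (metis le_imp_less_Suc mem_Collect_eq nth_mem)
  have pin_in: "\<And>T. pinchpoint M T \<Longrightarrow> \<exists>i\<le>k. T = c i"
  proof -
    fix T assume "pinchpoint M T"
    hence "T \<in> set Ts" using setT by simp
    then obtain i where "i < length Ts" "T = Ts ! i" by (auto simp: in_set_conv_nth)
    thus "\<exists>i\<le>k. T = c i" unfolding c_def using lenT by (intro exI[of _ i]) auto
  qed
  have c0: "c 0 = {}"
  proof -
    obtain j where j: "j \<le> k" "{} = c j" using pin_in[OF pin0] by blast
    show ?thesis
    proof (cases j)
      case 0 thus ?thesis using j by simp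
    next
      case (Suc j') hence "c 0 \<subset> c j" using lt[of 0 j] j by simp
      thus ?thesis using j by auto
    qed
  qed
  have csub: "\<And>i. i \<le> k \<Longrightarrow> c i \<subseteq> fst M"
  proof -
    fix i assume "i \<le> k"
    hence "c i \<in> Dlat M" using pinc unfolding pinchpoint_def by simp
    thus "c i \<subseteq> fst M" by (rule Dlat_sub)
  qed
  have ck: "c k = fst M"
  proof -
    obtain j where j: "j \<le> k" "fst M = c j" using pin_in[OF pinS] by blast
    show ?thesis
    proof (cases "j < k")
      case True hence "c j \<subset> c k" using lt by simp
      thus ?thesis using j csub[of k] by auto
    next
      case False thus ?thesis using j by simp
    qed
  qed
  have ppc: "\<And>i. i \<le> k \<Longrightarrow> PP M (c i)" using pinc by (rule pinch_PP)
  have ch: "chainP M c k" unfolding chainP_def using c0 ck st ppc by auto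
  have pf: "primary_factors M Ts = facs M c k"
  proof -
    have "[1..<length Ts] = map Suc [0..<k]" using lenT by (simp add: map_Suc_upt)
    thus ?thesis unfolding primary_factors_def facs_def c_def by simp
  qed
  have consec: "\<And>i T. i < k \<Longrightarrow> pinchpoint M T \<Longrightarrow> c i \<subset> T \<Longrightarrow> T \<subset> c (Suc i) \<Longrightarrow> False"
  proof -
    fix i T assume i: "i < k" and p: "pinchpoint M T" and a: "c i \<subset> T" and b: "T \<subset> c (Suc i)"
    obtain j where j: "j \<le> k" "T = c j" using pin_in[OF p] by blast
    have "\<not> c j \<subseteq> c i" using a j by auto
    hence "i < j" using ch_le_iff[OF st, of j i] i j by auto
    moreover have "\<not> c (Suc i) \<subseteq> c j" using b j by auto
    hence "j < Suc i" using ch_le_iff[OF st, of "Suc i" j] i j by auto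
    ultimately show False by simp
  qed
  show ?thesis
  proof (intro allI iffI)
    fix Ms
    assume "Ms = primary_factors M Ts"
    hence Ms: "Ms = facs M c k" using pf by simp
    have fac: "factorization Ms M" using m.F2[OF ch] Ms by simp
    moreover have "\<forall>N\<in>set Ms. irreducible N \<or> uniform N"
    proof
      fix N assume "N \<in> set Ms"
      then obtain i where i: "i < k" and N: "N = minor M (c i) (c (Suc i))" using Ms unfolding facs_def by auto
      have ci: "c i \<subset> c (Suc i)" using st i by simp
      have cS: "c (Suc i) \<subseteq> fst M" using csub i by simp
      show "irreducible N \<or> uniform N"
      proof (cases "\<exists>W. c i \<subset> W \<and> W \<subset> c (Suc i) \<and> PP M W")
        case False
        hence "irreducible N" unfolding N using m.irr_iff[OF ci cS] ppc i by simp
        thus ?thesis by simp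
      next
        case True
        then obtain W where W: "c i \<subset> W" "W \<subset> c (Suc i)" "PP M W" by blast
        obtain D1 D2 where D: "pinchpoint M D1" "pinchpoint M D2" "D1 \<subseteq> W" "W \<subseteq> D2"
          "\<forall>D\<in>Dlat M. D \<subseteq> D1 \<or> D2 \<subseteq> D" "\<forall>D\<in>Dlat M. D \<subseteq> W \<longrightarrow> D \<subseteq> D1" "\<forall>D\<in>Dlat M. W \<subseteq> D \<longrightarrow> D2 \<subseteq> D"
          using D3[OF W(3)] by (elim exE conjE) (rule that; assumption)
        have "c i \<in> Dlat M" using pinc i unfolding pinchpoint_def by simp
        hence ciD: "c i \<subseteq> D1" using D(6) W(1) by blast
        have e1: "D1 = c i"
        proof (rule ccontr)
          assume "D1 \<noteq> c i"
          hence "c i \<subset> D1" using ciD by auto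
          moreover have "D1 \<subset> c (Suc i)" using D(3) W(2) by auto
          ultimately show False using consec[OF i D(1)] by simp
        qed
        have "c (Suc i) \<in> Dlat M" using pinc i unfolding pinchpoint_def by simp
        hence ciD2: "D2 \<subseteq> c (Suc i)" using D(7) W(2) by blast
        have e2: "D2 = c (Suc i)"
        proof (rule ccontr)
          assume "D2 \<noteq> c (Suc i)"
          hence "D2 \<subset> c (Suc i)" using ciD2 by auto
          moreover have "c i \<subset> D2" using D(4) W(1) by auto
          ultimately show False using consec[OF i D(2)] by simp
        qed
        have "uniform N" unfolding N using ci cS D(5) e1 e2 by (intro m.blocks_uni) auto
        thus ?thesis by simp
      qed
    qed
    moreover have "\<forall>i j. i < j \<and> j < length Ms \<longrightarrow> \<not> uniform (free_prod_list (take (j - i + 1) (drop i Ms)))"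
    proof (intro allI impI)
      fix i j assume ij: "i < j \<and> j < length Ms"
      hence jk: "j < k" using Ms unfolding facs_def by simp
      have "take (j - i + 1) (drop i Ms) = map (\<lambda>i. minor M (c i) (c (Suc i))) [i..<Suc j]"
        unfolding Ms facs_def using ij jk by (intro td) auto
      hence e: "free_prod_list (take (j - i + 1) (drop i Ms)) = minor M (c i) (c (Suc j))"
        using m.chain_seg[OF ch, of i "Suc j"] ij jk by simp
      show "\<not> uniform (free_prod_list (take (j - i + 1) (drop i Ms)))"
      proof
        assume u: "uniform (free_prod_list (take (j - i + 1) (drop i Ms)))"
        have "c (Suc i) \<in> Dlat M" using pinc ij jk unfolding pinchpoint_def by simp
        hence "c (Suc i) \<subseteq> c i \<or> c (Suc j) \<subseteq> c (Suc i)"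
          using u e ij jk ppc csub ch_mono[OF st, of i "Suc j"] by (intro m.uni_blocks) auto
        moreover have "\<not> c (Suc i) \<subseteq> c i" using lt[of i "Suc i"] ij jk by auto
        moreover have "\<not> c (Suc j) \<subseteq> c (Suc i)" using lt[of "Suc i" "Suc j"] ij jk by auto
        ultimately show False by simp
      qed
    qed
    ultimately show "factorization Ms M \<and> (\<forall>N\<in>set Ms. irreducible N \<or> uniform N)
      \<and> (\<forall>i j. i < j \<and> j < length Ms \<longrightarrow> \<not> uniform (free_prod_list (take (j - i + 1) (drop i Ms))))" by simp
  next
    fix Ms
    assume h: "factorization Ms M \<and> (\<forall>N\<in>set Ms. irreducible N \<or> uniform N)
      \<and> (\<forall>i j. i < j \<and> j < length Ms \<longrightarrow> \<not> uniform (free_prod_list (take (j - i + 1) (drop i Ms))))"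
    obtain n where n: "length Ms = n" by blast
    obtain d where d: "chainP M d n" "Ms = facs M d n" using F1[OF assms(1)] h n by blast
    have d0: "d 0 = {}" and dm: "d n = fst M" and std: "\<forall>i<n. d i \<subset> d (Suc i)"
      and ppd: "\<forall>i\<le>n. PP M (d i)" using d(1) unfolding chainP_def by auto
    have dsub: "\<And>i. i \<le> n \<Longrightarrow> d i \<subseteq> fst M" using chain_sub[OF d(1)] by auto
    have iu: "\<And>i. i < n \<Longrightarrow> irreducible (minor M (d i) (d (Suc i))) \<or> uniform (minor M (d i) (d (Suc i)))"
    proof -
      fix i assume i: "i < n"
      have "minor M (d i) (d (Suc i)) \<in> set Ms" using d(2) i unfolding facs_def by simp
      thus "irreducible (minor M (d i) (d (Suc i))) \<or> uniform (minor M (d i) (d (Suc i)))" using h by blast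
    qed
    have nocons: "\<And>a b. a < b \<Longrightarrow> b \<le> n \<Longrightarrow> Suc a < b \<Longrightarrow> \<not> uniform (minor M (d a) (d b))"
    proof -
      fix a b assume ab: "a < b" "b \<le> n" "Suc a < b"
      have "take (b - 1 - a + 1) (drop a (facs M d n)) = map (\<lambda>i. minor M (d i) (d (Suc i))) [a..<Suc (b - 1)]"
        unfolding facs_def using ab by (intro td) auto
      moreover have "Suc (b - 1) = b" using ab by simp
      ultimately have "free_prod_list (take (b - 1 - a + 1) (drop a Ms)) = minor M (d a) (d b)"
        using m.chain_seg[OF d(1), of a b] ab d(2) by simp
      moreover have "\<not> uniform (free_prod_list (take (b - 1 - a + 1) (drop a Ms)))"
      proof -
        have hh: "\<forall>i j. i < j \<and> j < n \<longrightarrow> \<not> uniform (free_prod_list (take (j - i + 1) (drop i Ms)))"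
          using h n by blast
        have "a < b - 1 \<and> b - 1 < n" using ab by auto
        thus ?thesis using hh by blast
      qed
      ultimately show "\<not> uniform (minor M (d a) (d b))" by simp
    qed
    have cmpd: "\<And>i D. i \<le> n \<Longrightarrow> D \<in> Dlat M \<Longrightarrow> D \<subseteq> d i \<or> d i \<subseteq> D"
    proof -
      fix i D assume i: "i \<le> n" and D: "D \<in> Dlat M"
      have "\<forall>D\<in>Dlat M. D \<subseteq> d i \<or> d i \<subseteq> D" using D1[OF dsub[OF i]] ppd i by simp
      thus "D \<subseteq> d i \<or> d i \<subseteq> D" using D by blast
    qed
    have A: "\<And>T. pinchpoint M T \<Longrightarrow> \<exists>i\<le>n. T = d i"
    proof -
      fix T assume pT: "pinchpoint M T"
      have TD: "T \<in> Dlat M" using pT unfolding pinchpoint_def by simp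
      have TS: "T \<subseteq> fst M" using TD by (rule Dlat_sub)
      show "\<exists>i\<le>n. T = d i"
      proof (cases "\<forall>i<n. d i \<subseteq> T \<longrightarrow> d (Suc i) \<subseteq> T")
        case True
        have "\<And>i. i \<le> n \<Longrightarrow> d i \<subseteq> T"
        proof -
          fix i show "i \<le> n \<Longrightarrow> d i \<subseteq> T"
            by (induction i) (use d0 True in auto)
        qed
        hence "d n \<subseteq> T" by simp
        hence "T = d n" using dm TS by auto
        thus ?thesis by auto
      next
        case False
        then obtain i where i: "i < n" "d i \<subseteq> T" "\<not> d (Suc i) \<subseteq> T" by blast
        have "T \<subseteq> d (Suc i)" using cmpd[of "Suc i" T] i TD by auto
        show ?thesis
        proof (cases "T = d i")
          case True
          have "i \<le> n" using i by simp
          thus ?thesis using True by blast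
        next
          case False
          have a: "d i \<subset> T" using False i by auto
          have b: "T \<subset> d (Suc i)" using \<open>T \<subseteq> d (Suc i)\<close> i by auto
          have ds: "d i \<subset> d (Suc i)" using std i by simp
          have dS: "d (Suc i) \<subseteq> fst M" using dsub i by simp
          have pi: "PP M (d i)" and pSi: "PP M (d (Suc i))" using ppd i by auto
          have ex: "\<exists>W. d i \<subset> W \<and> W \<subset> d (Suc i) \<and> PP M W" using a b pinch_PP[OF pT] by blast
          have "\<not> irreducible (minor M (d i) (d (Suc i)))" using m.irr_iff[OF ds dS pi pSi] ex by simp
          hence u: "uniform (minor M (d i) (d (Suc i)))" using iu i by blast
          have "T \<subseteq> d i \<or> d (Suc i) \<subseteq> T"
            using ds dS pi pSi u TD by (intro m.uni_blocks) auto
          thus ?thesis using a b by auto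
        qed
      qed
    qed
    have B: "\<And>i. i \<le> n \<Longrightarrow> pinchpoint M (d i)"
    proof -
      fix i assume i: "i \<le> n"
      show "pinchpoint M (d i)"
      proof (cases "d i \<in> Dlat M")
        case True thus ?thesis using PP_pinch[of M "d i"] ppd i by simp
      next
        case False
        obtain D1 D2 where D: "pinchpoint M D1" "pinchpoint M D2" "D1 \<subseteq> d i" "d i \<subseteq> D2"
          "\<forall>D\<in>Dlat M. D \<subseteq> D1 \<or> D2 \<subseteq> D"
          using D3[OF ppd[rule_format, OF i]] by (elim exE conjE) (rule that; assumption)
        have "D1 \<in> Dlat M" "D2 \<in> Dlat M" using D unfolding pinchpoint_def by auto
        hence n1: "D1 \<noteq> d i" and n2: "D2 \<noteq> d i" using False by auto
        obtain a where a: "a \<le> n" "D1 = d a" using A[OF D(1)] by blast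
        obtain b where b: "b \<le> n" "D2 = d b" using A[OF D(2)] by blast
        have "a \<le> i" using ch_le_iff[OF std a(1) i] D(3) a by simp
        hence ai: "a < i" using n1 a by (cases "a = i") auto
        have "i \<le> b" using ch_le_iff[OF std i b(1)] D(4) b by simp
        hence ib: "i < b" using n2 b by (cases "i = b") auto
        have "d a \<subseteq> d b" using ch_le_iff[OF std a(1) b(1)] ai ib by simp
        hence "uniform (minor M (d a) (d b))" using dsub[OF b(1)] D(5) a b by (intro m.blocks_uni) auto
        moreover have "\<not> uniform (minor M (d a) (d b))" using nocons ai ib b by simp
        ultimately show ?thesis by simp
      qed
    qed
    have "set (map d [0..<Suc n]) = set Ts"
    proof
      show "set (map d [0..<Suc n]) \<subseteq> set Ts" using B setT by auto
      show "set Ts \<subseteq> set (map d [0..<Suc n])"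
      proof
        fix T assume "T \<in> set Ts"
        hence "pinchpoint M T" using setT by simp
        then obtain i where "i \<le> n" "T = d i" using A by blast
        thus "T \<in> set (map d [0..<Suc n])" by (auto simp del: upt_Suc)
      qed
    qed
    moreover have "sorted_wrt (\<subset>) (map d [0..<Suc n])"
      unfolding sorted_wrt_iff_nth_less using ch_strict[OF std] by (auto simp del: upt_Suc)
    ultimately have eqT: "map d [0..<Suc n] = Ts" using sorted sorted_psub_unique by blast
    hence km: "k = n" using lenT by (metis length_map length_upt diff_zero Suc_inject)
    have cd: "\<And>i. i \<le> n \<Longrightarrow> c i = d i"
    proof -
      fix i assume "i \<le> n"
      hence "Ts ! i = map d [0..<Suc n] ! i" using eqT by simp
      also have "\<dots> = d i" using \<open>i \<le> n\<close> by (simp del: upt_Suc)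
      finally show "c i = d i" unfolding c_def .
    qed
    have "facs M c k = facs M d n" unfolding facs_def km using cd by (intro map_cong) auto
    thus "Ms = primary_factors M Ts" using pf d(2) by simp
  qed
qed



end
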